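(* Let $\kappa>0$ depend on $\beta>0$ with $\tilde\kappa=\kappa\beta<\frac1\pi$, and let $\varphi_\beta$ be a minimizer of $F_{\beta,\kappa}$ in $\mathcal J$. If $\tilde\kappa$ is independent of $\beta$, then $\varphi_\beta(1)=\arcsin(2\kappa\beta)+o_\beta(\beta^n)$ for all $n\in\mathbb N^*$; in particular, for $\beta$ small enough, $0\le\varphi_\beta(x)\le\varphi_\beta(1)<\frac\pi2$ for all $x\in[0,1]$. If instead $\tilde\kappa=o_\beta(1)$, then $\varphi_\beta(1)=2\kappa\beta(1+o_\beta(1))$.
   Context: For parameters $\beta>0$ and $\kappa>0$ define, for $\varphi\in H^1((0,1))$, $$F_{\beta,\kappa}(\varphi)=\frac18\int_0^1\left(\varphi'(x)^2+\frac{1}{\beta^2}\sin^2\varphi(x)\right)dx-\frac{\kappa}{2}\int_0^1\varphi'(x)\,dx,$$ and $\mathcal J=\{\varphi\in H^1((0,1)):\varphi(0)=0\}$. The notation $o_\beta$ refers to the limit $\beta\to0$. *)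

theory Defs
  imports "HOL-Analysis.Analysis" "HOL-Library.Landau_Symbols"
begin

text \<open>H^1((0,1)) in one dimension: phi is (on [0,1]) the primitive of a square-integrable
  function g, which is then its weak derivative phi'.\<close>
definition weak_deriv_H1 :: "(real \<Rightarrow> real) \<Rightarrow> (real \<Rightarrow> real) \<Rightarrow> bool" where
  "weak_deriv_H1 \<phi> g \<longleftrightarrow>
     g \<in> borel_measurable lborel \<and>
     set_integrable lborel {0..1} (\<lambda>t. (g t)\<^sup>2) \<and>
     (\<forall>x\<in>{0..1}. \<phi> x = \<phi> 0 + (LBINT t=0..x. g t))"

definition H1 :: "(real \<Rightarrow> real) set" where
  "H1 = {\<phi>. \<exists>g. weak_deriv_H1 \<phi> g}"

definition J_set :: "(real \<Rightarrow> real) set" where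
  "J_set = {\<phi>. \<phi> \<in> H1 \<and> \<phi> 0 = 0}"

definition F_energy :: "real \<Rightarrow> real \<Rightarrow> (real \<Rightarrow> real) \<Rightarrow> (real \<Rightarrow> real) \<Rightarrow> real" where
  "F_energy \<beta> \<kappa> \<phi> g =
     1/8 * (LINT x:{0..1}|lborel. (g x)\<^sup>2 + (sin (\<phi> x))\<^sup>2 / \<beta>\<^sup>2)
     - \<kappa>/2 * (LINT x:{0..1}|lborel. g x)"

definition is_minimizer :: "real \<Rightarrow> real \<Rightarrow> (real \<Rightarrow> real) \<Rightarrow> bool" where
  "is_minimizer \<beta> \<kappa> \<phi> \<longleftrightarrow>
     \<phi> \<in> J_set \<and>
     (\<exists>g. weak_deriv_H1 \<phi> g \<and>
        (\<forall>\<psi> h. \<psi> \<in> J_set \<longrightarrow> weak_deriv_H1 \<psi> h \<longrightarrow> F_energy \<beta> \<kappa> \<phi> g \<le> F_energy \<beta> \<kappa> \<psi> h))"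

end

theory Submission
  imports Defs "HOL-Real_Asymp.Real_Asymp"
begin



lemma W_exists: "\<exists>W::real\<Rightarrow>real. W 0 = 0 \<and> (\<forall>y. (W has_real_derivative \<bar>sin y\<bar>) (at y))"
proof -
  define W where "W = (\<lambda>u::real. LBINT t=0..u. \<bar>sin t\<bar>)"
  have "(W has_real_derivative \<bar>sin y\<bar>) (at y)" for y
  proof -
    have "(W has_vector_derivative \<bar>sin y\<bar>) (at y within {-\<bar>y\<bar>-1..\<bar>y\<bar>+1})"
    proof -
      have c: "continuous_on {-\<bar>y\<bar>-1..\<bar>y\<bar>+1} (\<lambda>t. \<bar>sin t\<bar>)" by (auto intro!: continuous_intros)
      show ?thesis
      using interval_integral_FTC2[of "-\<bar>y\<bar>-1" 0 "\<bar>y\<bar>+1" "\<lambda>t. \<bar>sin t\<bar>" y, OF _ _ c]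
      unfolding W_def zero_ereal_def by simp
    qed
    then have "(W has_vector_derivative \<bar>sin y\<bar>) (at y)"
      by (subst (asm) at_within_interior) auto
    then show ?thesis by (simp add: has_real_derivative_iff_has_vector_derivative)
  qed
  moreover have "W 0 = 0" by (simp add: W_def zero_ereal_def[symmetric])
  ultimately show ?thesis by blast
qed
definition Wf :: "real \<Rightarrow> real" where
  "Wf = (SOME W. W 0 = 0 \<and> (\<forall>y. (W has_real_derivative \<bar>sin y\<bar>) (at y)))"

lemma Wf_props: "Wf 0 = 0" "\<And>y. (Wf has_real_derivative \<bar>sin y\<bar>) (at y)"
proof -
  have "Wf 0 = 0 \<and> (\<forall>y. (Wf has_real_derivative \<bar>sin y\<bar>) (at y))"
    unfolding Wf_def using W_exists by (rule someI_ex)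
  then show "Wf 0 = 0" "\<And>y. (Wf has_real_derivative \<bar>sin y\<bar>) (at y)" by auto
qed

lemma Wf_0[simp]: "Wf 0 = 0" by (rule Wf_props)
lemma Wf_deriv: "(Wf has_real_derivative \<bar>sin y\<bar>) (at y)" by (rule Wf_props)

lemma Wf_isCont: "isCont Wf y"
  using Wf_deriv DERIV_isCont by blast

lemma Wf_cont: "continuous_on S Wf"
  using Wf_isCont continuous_at_imp_continuous_on by blast

lemma mono_by_deriv:
  fixes f f' :: "real \<Rightarrow> real"
  assumes "\<And>x. a \<le> x \<Longrightarrow> x \<le> b \<Longrightarrow> (f has_real_derivative f' x) (at x)"
    and "\<And>x. a \<le> x \<Longrightarrow> x \<le> b \<Longrightarrow> f' x \<ge> 0" and "a \<le> b"
  shows "f a \<le> f b"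
proof (rule DERIV_nonneg_imp_increasing_open[OF \<open>a \<le> b\<close>])
  show "\<And>x. a < x \<Longrightarrow> x < b \<Longrightarrow> \<exists>y. (f has_real_derivative y) (at x) \<and> 0 \<le> y"
    using assms by (meson less_imp_le)
  show "continuous_on {a..b} f"
  proof (rule continuous_at_imp_continuous_on, rule ballI)
    fix x assume "x \<in> {a..b}"
    then show "isCont f x" using assms(1) DERIV_isCont by auto
  qed
qed

lemma Wf_mono: "x \<le> y \<Longrightarrow> Wf x \<le> Wf y"
  by (rule mono_by_deriv[OF Wf_deriv]) auto

lemma Wf_cos: assumes "0 \<le> y" "y \<le> pi" shows "Wf y = 1 - cos y"
proof -
  have "(\<lambda>x. Wf x - (1 - cos x)) y = (\<lambda>x. Wf x - (1 - cos x)) 0"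
  proof (cases "y = 0")
    case False
    then have "0 < y" using assms by auto
    show ?thesis
    proof (rule DERIV_isconst_end[OF \<open>0 < y\<close>])
      show "continuous_on {0..y} (\<lambda>x. Wf x - (1 - cos x))"
        by (intro continuous_intros Wf_cont)
      fix x assume x: "0 < x" "x < y"
      have "sin x \<ge> 0" using x assms by (intro sin_ge_zero) auto
      have "((\<lambda>x. Wf x - (1 - cos x)) has_real_derivative \<bar>sin x\<bar> - (0 - - sin x)) (at x)"
        by (intro derivative_intros Wf_deriv DERIV_cos)
      then show "((\<lambda>x. Wf x - (1 - cos x)) has_real_derivative 0) (at x)"
        using \<open>sin x \<ge> 0\<close> by simp
    qed
  qed simp
  then show ?thesis by simp
qed

lemma Wf_pi: "Wf pi = 2" by (simp add: Wf_cos)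

lemma Wf_shift: "Wf (y + pi) = Wf y + 2"
proof -
  have d: "\<forall>x. ((\<lambda>y. Wf (y + pi) - Wf y) has_real_derivative 0) (at x)"
  proof
    fix x
    have "((\<lambda>y. Wf (y + pi) - Wf y) has_real_derivative \<bar>sin (x + pi)\<bar> * 1 - \<bar>sin x\<bar>) (at x)"
      by (auto intro!: derivative_eq_intros DERIV_chain2[OF Wf_deriv] Wf_deriv)
    then show "((\<lambda>y. Wf (y + pi) - Wf y) has_real_derivative 0) (at x)" by simp
  qed
  show ?thesis using DERIV_isconst_all[OF d, of y 0] by (simp add: Wf_pi)
qed

lemma Wf_odd: "Wf (- y) = - Wf y"
proof -
  have d: "\<forall>x. ((\<lambda>y. Wf (- y) + Wf y) has_real_derivative 0) (at x)"
  proof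
    fix x
    have "((\<lambda>y. Wf (- y) + Wf y) has_real_derivative \<bar>sin (- x)\<bar> * (- 1) + \<bar>sin x\<bar>) (at x)"
      by (auto intro!: derivative_eq_intros DERIV_chain2[OF Wf_deriv] Wf_deriv)
    then show "((\<lambda>y. Wf (- y) + Wf y) has_real_derivative 0) (at x)" by simp
  qed
  show ?thesis using DERIV_isconst_all[OF d, of y 0] by simp
qed

lemma Wf_pos: assumes "0 < y" shows "0 < Wf y"
proof -
  have "Wf (min y (pi/2)) \<le> Wf y" by (rule Wf_mono) auto
  moreover have "Wf (min y (pi/2)) = 1 - cos (min y (pi/2))"
    using assms pi_gt_zero by (intro Wf_cos) (auto simp: min_le_iff_disj)
  moreover have "cos (min y (pi/2)) < 1"
  proof -
    have "cos (min y (pi/2)) < cos 0"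
      using assms pi_gt_zero by (intro cos_monotone_0_pi) (auto simp: min_le_iff_disj)
    then show ?thesis by simp
  qed
  ultimately show ?thesis by linarith
qed



lemma abs_le_1_sq: "\<bar>y::real\<bar> \<le> 1 + y\<^sup>2"
proof -
  have "0 \<le> (\<bar>y\<bar> - 1)\<^sup>2" by simp
  then have "2 * \<bar>y\<bar> \<le> \<bar>y\<bar>\<^sup>2 + 1" by (simp add: power2_eq_square algebra_simps)
  moreover have "\<bar>y\<bar>\<^sup>2 = y\<^sup>2" by simp
  moreover have "0 \<le> y\<^sup>2" by simp
  ultimately show ?thesis by linarith
qed

lemma wd_basic:
  assumes "weak_deriv_H1 \<phi> g"
  shows "set_integrable lborel {0..1} g"
    and "g integrable_on {0..1}"
    and "(\<lambda>t. \<bar>g t\<bar>) integrable_on {0..1}"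
    and "(\<lambda>t. (g t)\<^sup>2) integrable_on {0..1}"
    and "\<And>x. x \<in> {0..1} \<Longrightarrow> \<phi> x = \<phi> 0 + integral {0..x} g"
    and "continuous_on {0..1} \<phi>"
proof -
  have gm: "g \<in> borel_measurable lborel" and g2: "set_integrable lborel {0..1} (\<lambda>t. (g t)\<^sup>2)"
    and phi: "\<forall>x\<in>{0..1}. \<phi> x = \<phi> 0 + (LBINT t=0..x. g t)"
    using assms unfolding weak_deriv_H1_def by blast+
  have one: "set_integrable lborel {0..1::real} (\<lambda>t. 1::real)"
    unfolding set_integrable_def using borel_integrable_compact[of "{0..1::real}" "\<lambda>t. 1::real"] by simp
  have b: "set_integrable lborel {0..1} (\<lambda>t. 1 + (g t)\<^sup>2)"
    using set_integral_add(1)[OF one g2] .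
  show gi: "set_integrable lborel {0..1} g"
  proof (rule set_integrable_bound[OF b])
    show "set_borel_measurable lborel {0..1} g"
      unfolding set_borel_measurable_def
      by (rule borel_measurable_scaleR[OF borel_measurable_indicator]) (use gm in \<open>auto simp: measurable_lborel1\<close>)
    show "AE x in lborel. x \<in> {0..1} \<longrightarrow> norm (g x) \<le> norm (1 + (g x)\<^sup>2)"
    proof (rule AE_I2, intro impI)
      fix x
      have "\<bar>g x\<bar> \<le> 1 + (g x)\<^sup>2"
        by (rule abs_le_1_sq)
      then show "norm (g x) \<le> norm (1 + (g x)\<^sup>2)" by simp
    qed
  qed
  show "g integrable_on {0..1}" using set_borel_integral_eq_integral(1)[OF gi] .
  show "(\<lambda>t. \<bar>g t\<bar>) integrable_on {0..1}" using set_borel_integral_eq_integral(1)[OF set_integrable_abs[OF gi]] .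
  show "(\<lambda>t. (g t)\<^sup>2) integrable_on {0..1}" using set_borel_integral_eq_integral(1)[OF g2] .
  show eq: "\<phi> x = \<phi> 0 + integral {0..x} g" if x: "x \<in> {0..1}" for x
  proof -
    have gx: "set_integrable lborel {0..x} g"
      by (rule set_integrable_subset[OF gi]) (use x in auto)
    have "(LBINT t=0..x. g t) = (LBINT t=ereal 0..ereal x. g t)" by (simp only: zero_ereal_def)
    also have "\<dots> = (LBINT t:{0..x}. g t)" using x by (intro interval_integral_Icc) auto
    also have "\<dots> = integral {0..x} g" using set_borel_integral_eq_integral(2)[OF gx] .
    finally have L: "(LBINT t=0..x. g t) = integral {0..x} g" .
    have "\<phi> x = \<phi> 0 + (LBINT t=0..x. g t)" using phi x by blast
    then show ?thesis unfolding L .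
  qed
  show "continuous_on {0..1} \<phi>"
  proof -
    have "continuous_on {0..1} (\<lambda>x. \<phi> 0 + integral {0..x} g)"
      by (intro continuous_intros indefinite_integral_continuous_1 set_borel_integral_eq_integral(1)[OF gi])
    then show ?thesis by (rule continuous_on_eq) (rule eq[symmetric])
  qed
qed



lemma mvt_ivt:
  fixes F f \<phi> :: "real \<Rightarrow> real"
  assumes Fd: "\<And>y. (F has_real_derivative f y) (at y)"
    and pc: "continuous_on {x..y} \<phi>" and xy: "x \<le> y"
  shows "\<exists>s\<in>{x..y}. F (\<phi> y) - F (\<phi> x) = f (\<phi> s) * (\<phi> y - \<phi> x)"
proof (cases "\<phi> x = \<phi> y")
  case True
  then show ?thesis using xy by (intro bexI[of _ x]) auto
next
  case False
  show ?thesis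
  proof (cases "\<phi> x < \<phi> y")
    case True
    obtain z where z: "\<phi> x < z" "z < \<phi> y" "F (\<phi> y) - F (\<phi> x) = (\<phi> y - \<phi> x) * f z"
      using MVT2[OF True, of F f] Fd by blast
    obtain s where s: "x \<le> s" "s \<le> y" "\<phi> s = z"
      using IVT'[of \<phi> x z y, OF _ _ xy pc] z by auto
    show ?thesis using s z by (intro bexI[of _ s]) auto
  next
    case False
    then have lt: "\<phi> y < \<phi> x" using \<open>\<phi> x \<noteq> \<phi> y\<close> by auto
    obtain z where z: "\<phi> y < z" "z < \<phi> x" "F (\<phi> x) - F (\<phi> y) = (\<phi> x - \<phi> y) * f z"
      using MVT2[OF lt, of F f] Fd by blast
    obtain s where s: "x \<le> s" "s \<le> y" "\<phi> s = z"
      using IVT2'[of \<phi> y z x, OF _ _ xy pc] z by auto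
    show ?thesis using s z by (intro bexI[of _ s]) (auto simp: algebra_simps)
  qed
qed

lemma chain_rule_H1:
  fixes F f \<phi> g :: "real \<Rightarrow> real"
  assumes gi: "g integrable_on {u..v}" and gabs: "(\<lambda>t. \<bar>g t\<bar>) integrable_on {u..v}"
    and phi: "\<And>x. x \<in> {u..v} \<Longrightarrow> \<phi> x = \<phi> u + integral {u..x} g"
    and Fd: "\<And>y. (F has_real_derivative f y) (at y)" and fc: "continuous_on UNIV f"
    and uv: "u \<le> v"
  shows "((\<lambda>t. f (\<phi> t) * g t) has_integral (F (\<phi> v) - F (\<phi> u))) {u..v}"
proof -
  have pc: "continuous_on {u..v} \<phi>"
  proof -
    have "continuous_on {u..v} (\<lambda>x. \<phi> u + integral {u..x} g)"
      by (intro continuous_on_add continuous_on_const indefinite_integral_continuous_1 gi)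
    then show ?thesis by (rule continuous_on_eq) (rule phi[symmetric])
  qed
  have fpc: "continuous_on {u..v} (\<lambda>t. f (\<phi> t))"
    by (rule continuous_on_compose2[OF fc pc]) auto
  have gai: "g absolutely_integrable_on {u..v}"
    using gi gabs by (simp add: absolutely_integrable_on_def)
  have prod_ai: "(\<lambda>t. h t * g t) absolutely_integrable_on {x..y}"
    if hc: "continuous_on {u..v} h" and xy: "u \<le> x" "y \<le> v" for h x y
  proof -
    have sub: "{x..y} \<subseteq> {u..v}" using xy by auto
    have hc': "continuous_on {x..y} h" using continuous_on_subset[OF hc sub] .
    show ?thesis
    proof (rule absolutely_integrable_bounded_measurable_product_real)
      show "h \<in> borel_measurable (lebesgue_on {x..y})"
        by (rule continuous_imp_measurable_on_sets_lebesgue[OF hc']) auto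
      show "bounded (h ` {x..y})"
        using compact_continuous_image[OF hc'] compact_imp_bounded by auto
      show "g absolutely_integrable_on {x..y}"
        using absolutely_integrable_on_subinterval[OF gai sub] .
    qed auto
  qed
  have fgi: "(\<lambda>t. f (\<phi> t) * g t) integrable_on {x..y}" if "u \<le> x" "y \<le> v" for x y
    using prod_ai[OF fpc that] by (simp add: absolutely_integrable_on_def)
  define \<Phi> where "\<Phi> x = F (\<phi> x) - F (\<phi> u) - integral {u..x} (\<lambda>t. f (\<phi> t) * g t)" for x
  define G where "G x = integral {u..x} (\<lambda>t. \<bar>g t\<bar>)" for x
  have key: "\<bar>\<Phi> v\<bar> \<le> e * G v" if e: "e > 0" for e
  proof -
    have "uniformly_continuous_on {u..v} (\<lambda>t. f (\<phi> t))"
      by (rule compact_uniformly_continuous[OF fpc]) auto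
    then obtain d where d: "d > 0" and dd: "\<And>s t. s \<in> {u..v} \<Longrightarrow> t \<in> {u..v} \<Longrightarrow> dist s t < d \<Longrightarrow> dist (f (\<phi> s)) (f (\<phi> t)) < e"
      unfolding uniformly_continuous_on_def using e by metis
    have local: "\<bar>\<Phi> y - \<Phi> x\<bar> \<le> e * (G y - G x)" if xy: "u \<le> x" "x \<le> y" "y \<le> v" "y - x < d" for x y
    proof -
      obtain s where s: "s \<in> {x..y}" "F (\<phi> y) - F (\<phi> x) = f (\<phi> s) * (\<phi> y - \<phi> x)"
        using mvt_ivt[OF Fd continuous_on_subset[OF pc] xy(2)] xy by auto
      have gxy: "g integrable_on {x..y}" by (rule integrable_on_subinterval[OF gi]) (use xy in auto)
      have agxy: "(\<lambda>t. \<bar>g t\<bar>) integrable_on {x..y}" by (rule integrable_on_subinterval[OF gabs]) (use xy in auto)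
      have "\<phi> y - \<phi> x = integral {u..y} g - integral {u..x} g"
        using phi[of x] phi[of y] xy by auto
      also have "\<dots> = integral {x..y} g"
        using Henstock_Kurzweil_Integration.integral_combine[of u x y g]
          integrable_on_subinterval[OF gi, of u y] xy by auto
      finally have pd: "\<phi> y - \<phi> x = integral {x..y} g" .
      have i1: "integral {u..y} (\<lambda>t. f (\<phi> t) * g t) - integral {u..x} (\<lambda>t. f (\<phi> t) * g t) = integral {x..y} (\<lambda>t. f (\<phi> t) * g t)"
        using Henstock_Kurzweil_Integration.integral_combine[of u x y "\<lambda>t. f (\<phi> t) * g t"]
          fgi[of u y] xy by auto
      have "\<Phi> y - \<Phi> x = f (\<phi> s) * integral {x..y} g - integral {x..y} (\<lambda>t. f (\<phi> t) * g t)"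
        unfolding \<Phi>_def using s(2) pd i1 by (auto simp: algebra_simps)
      also have "\<dots> = integral {x..y} (\<lambda>t. (f (\<phi> s) - f (\<phi> t)) * g t)"
      proof -
        have "integral {x..y} (\<lambda>t. (f (\<phi> s) - f (\<phi> t)) * g t) = integral {x..y} (\<lambda>t. f (\<phi> s) * g t - f (\<phi> t) * g t)"
          by (simp add: algebra_simps)
        also have "\<dots> = integral {x..y} (\<lambda>t. f (\<phi> s) * g t) - integral {x..y} (\<lambda>t. f (\<phi> t) * g t)"
          by (rule integral_diff) (use integrable_on_cmult_left[OF gxy, of "f (\<phi> s)"] fgi[of x y] xy in auto)
        also have "\<dots> = f (\<phi> s) * integral {x..y} g - integral {x..y} (\<lambda>t. f (\<phi> t) * g t)"
          by simp
        finally show ?thesis by simp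
      qed
      finally have eq: "\<Phi> y - \<Phi> x = integral {x..y} (\<lambda>t. (f (\<phi> s) - f (\<phi> t)) * g t)" .
      have "norm (integral {x..y} (\<lambda>t. (f (\<phi> s) - f (\<phi> t)) * g t)) \<le> integral {x..y} (\<lambda>t. e * \<bar>g t\<bar>)"
      proof (rule integral_norm_bound_integral)
        show "(\<lambda>t. (f (\<phi> s) - f (\<phi> t)) * g t) integrable_on {x..y}"
        proof -
          have "(\<lambda>t. f (\<phi> s) * g t - f (\<phi> t) * g t) integrable_on {x..y}"
            by (rule integrable_diff) (use integrable_on_cmult_left[OF gxy, of "f (\<phi> s)"] fgi[of x y] xy in auto)
          then show ?thesis by (simp add: algebra_simps)
        qed
        show "(\<lambda>t. e * \<bar>g t\<bar>) integrable_on {x..y}" using integrable_on_cmult_left[OF agxy, of e] by simp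
        fix t assume t: "t \<in> {x..y}"
        have "dist (f (\<phi> s)) (f (\<phi> t)) < e"
          using dd[of s t] s(1) t xy by (auto simp: dist_real_def)
        then have "\<bar>f (\<phi> s) - f (\<phi> t)\<bar> \<le> e" by (simp add: dist_real_def)
        then have "\<bar>f (\<phi> s) - f (\<phi> t)\<bar> * \<bar>g t\<bar> \<le> e * \<bar>g t\<bar>"
          by (intro mult_right_mono) auto
        then show "norm ((f (\<phi> s) - f (\<phi> t)) * g t) \<le> e * \<bar>g t\<bar>" by (simp add: abs_mult)
      qed
      also have "\<dots> = e * integral {x..y} (\<lambda>t. \<bar>g t\<bar>)" by simp
      also have "integral {x..y} (\<lambda>t. \<bar>g t\<bar>) = G y - G x"
        unfolding G_def
        using Henstock_Kurzweil_Integration.integral_combine[of u x y "\<lambda>t. \<bar>g t\<bar>"]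
          integrable_on_subinterval[OF gabs, of u y] xy by auto
      finally show ?thesis using eq by (simp add: real_norm_def)
    qed
    have ind: "\<forall>x. u \<le> x \<and> x \<le> v \<and> x - u \<le> real n * (d/2) \<longrightarrow> \<bar>\<Phi> x\<bar> \<le> e * G x" for n
    proof (induction n)
      case 0
      show ?case by (auto simp: \<Phi>_def G_def)
    next
      case (Suc n)
      show ?case
      proof (intro allI impI)
        fix x assume x: "u \<le> x \<and> x \<le> v \<and> x - u \<le> real (Suc n) * (d / 2)"
        define x' where "x' = max u (x - d/2)"
        have x': "u \<le> x'" "x' \<le> x" "x - x' < d" "x' - u \<le> real n * (d/2)"
          using x d mult_nonneg_nonneg[of d "real n"] by (auto simp: x'_def algebra_simps max_def)
        have "\<bar>\<Phi> x'\<bar> \<le> e * G x'" using Suc.IH x' x by auto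
        moreover have "\<bar>\<Phi> x - \<Phi> x'\<bar> \<le> e * (G x - G x')" using local[of x' x] x' x by auto
        ultimately show "\<bar>\<Phi> x\<bar> \<le> e * G x" by (simp add: right_diff_distrib abs_le_iff)
      qed
    qed
    obtain n where "(v - u) / (d/2) \<le> real n" using real_arch_simple by blast
    then have "v - u \<le> real n * (d/2)" using d by (simp add: field_simps)
    then show ?thesis using ind[of n] uv by auto
  qed
  have "\<Phi> v = 0"
  proof (rule ccontr)
    assume ne: "\<Phi> v \<noteq> 0"
    have Gnn: "G v \<ge> 0" unfolding G_def by (rule integral_nonneg[OF gabs]) auto
    define e where "e = \<bar>\<Phi> v\<bar> / (2 * (G v + 1))"
    have e: "e > 0" using ne Gnn by (auto simp: e_def)
    have "\<bar>\<Phi> v\<bar> \<le> e * G v" by (rule key[OF e])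
    also have "\<dots> < \<bar>\<Phi> v\<bar>"
    proof -
      have a: "0 \<le> G v * \<bar>\<Phi> v\<bar>" using Gnn by simp
      have b: "0 < \<bar>\<Phi> v\<bar>" using ne by simp
      show ?thesis using Gnn ne apply (simp add: e_def field_simps) using a b by linarith
    qed
    finally show False by simp
  qed
  then have "integral {u..v} (\<lambda>t. f (\<phi> t) * g t) = F (\<phi> v) - F (\<phi> u)"
    by (simp add: \<Phi>_def)
  then show ?thesis using fgi[of u v] by (metis has_integral_integral order_refl)
qed


lemma density_integrable:
  assumes wd: "weak_deriv_H1 \<phi> g" and uv: "0 \<le> u" "v \<le> 1"
  shows "(\<lambda>t. (g t)\<^sup>2 + (sin (\<phi> t))\<^sup>2 / \<beta>\<^sup>2) integrable_on {u..v}"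
proof -
  have sub: "{u..v} \<subseteq> {0..1}" using uv by auto
  have pc: "continuous_on {u..v} \<phi>" using continuous_on_subset[OF wd_basic(6)[OF wd] sub] .
  have "(\<lambda>t. (g t)\<^sup>2) integrable_on {u..v}"
    by (rule integrable_on_subinterval[OF wd_basic(4)[OF wd] sub])
  moreover have "(\<lambda>t. (sin (\<phi> t))\<^sup>2 / \<beta>\<^sup>2) integrable_on {u..v}"
  proof -
    have "(\<lambda>t. (sin (\<phi> t))\<^sup>2) integrable_on {u..v}"
      by (rule integrable_continuous_interval) (intro continuous_intros pc)
    then show ?thesis by (rule integrable_on_divide)
  qed
  ultimately show ?thesis by (rule integrable_add)
qed

lemma phi_from:
  assumes wd: "weak_deriv_H1 \<phi> g" and uv: "0 \<le> u" "u \<le> x" "x \<le> 1"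
  shows "\<phi> x = \<phi> u + integral {u..x} g"
proof -
  have "integral {0..u} g + integral {u..x} g = integral {0..x} g"
    using Henstock_Kurzweil_Integration.integral_combine[of 0 u x g]
      integrable_on_subinterval[OF wd_basic(2)[OF wd], of 0 x] uv by auto
  then show ?thesis using wd_basic(5)[OF wd, of x] wd_basic(5)[OF wd, of u] uv by simp
qed

lemma calib:
  assumes wd: "weak_deriv_H1 \<phi> g" and b: "\<beta> > 0" and uv: "0 \<le> u" "u \<le> v" "v \<le> 1"
  shows "2 / \<beta> * \<bar>Wf (\<phi> v) - Wf (\<phi> u)\<bar> \<le> integral {u..v} (\<lambda>t. (g t)\<^sup>2 + (sin (\<phi> t))\<^sup>2 / \<beta>\<^sup>2)"
proof -
  have sub: "{u..v} \<subseteq> {0..1}" using uv by auto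
  have cr: "((\<lambda>t. \<bar>sin (\<phi> t)\<bar> * g t) has_integral (Wf (\<phi> v) - Wf (\<phi> u))) {u..v}"
  proof (rule chain_rule_H1)
    show "g integrable_on {u..v}" by (rule integrable_on_subinterval[OF wd_basic(2)[OF wd] sub])
    show "(\<lambda>t. \<bar>g t\<bar>) integrable_on {u..v}" by (rule integrable_on_subinterval[OF wd_basic(3)[OF wd] sub])
    show "\<phi> x = \<phi> u + integral {u..x} g" if "x \<in> {u..v}" for x
      using phi_from[OF wd, of u x] that uv by auto
    show "(Wf has_real_derivative \<bar>sin y\<bar>) (at y)" for y by (rule Wf_deriv)
    show "continuous_on UNIV (\<lambda>y::real. \<bar>sin y\<bar>)" using continuous_on_rabs[OF continuous_on_sin[OF continuous_on_id]] by simp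
  qed (use uv in auto)
  have di: "(\<lambda>t. (g t)\<^sup>2 + (sin (\<phi> t))\<^sup>2 / \<beta>\<^sup>2) integrable_on {u..v}"
    by (rule density_integrable[OF wd]) (use uv in auto)
  have bound: "\<sigma> * (2 / \<beta>) * (Wf (\<phi> v) - Wf (\<phi> u)) \<le> integral {u..v} (\<lambda>t. (g t)\<^sup>2 + (sin (\<phi> t))\<^sup>2 / \<beta>\<^sup>2)"
    if s: "\<sigma> = 1 \<or> \<sigma> = -1" for \<sigma> :: real
  proof -
    have cr2: "((\<lambda>t. \<sigma> * (2 / \<beta>) * (\<bar>sin (\<phi> t)\<bar> * g t)) has_integral \<sigma> * (2 / \<beta>) * (Wf (\<phi> v) - Wf (\<phi> u))) {u..v}"
      using has_integral_mult_right[OF cr] .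
    have pw: "\<sigma> * (2 / \<beta>) * (\<bar>sin (\<phi> t)\<bar> * g t) \<le> (g t)\<^sup>2 + (sin (\<phi> t))\<^sup>2 / \<beta>\<^sup>2" for t
    proof -
      have sq: "\<sigma>\<^sup>2 = 1" using s by auto
      have "0 \<le> (g t - \<sigma> * \<bar>sin (\<phi> t)\<bar> / \<beta>)\<^sup>2" by simp
      also have "\<dots> = (g t)\<^sup>2 + \<sigma>\<^sup>2 * (\<bar>sin (\<phi> t)\<bar>)\<^sup>2 / \<beta>\<^sup>2 - \<sigma> * (2 / \<beta>) * (\<bar>sin (\<phi> t)\<bar> * g t)"
        using b by (simp add: power2_eq_square field_simps)
      finally show ?thesis using sq by simp
    qed
    show ?thesis
      using has_integral_le[OF cr2 integrable_integral[OF di]] pw by auto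
  qed
  show ?thesis
  proof (cases "Wf (\<phi> v) - Wf (\<phi> u) \<ge> 0")
    case True
    then show ?thesis using bound[of 1] by simp
  next
    case False
    then show ?thesis using bound[of "-1"] b by (simp add: field_simps)
  qed
qed

lemma energy_eq:
  assumes wd: "weak_deriv_H1 \<phi> g"
  shows "F_energy \<beta> \<kappa> \<phi> g = 1/8 * integral {0..1} (\<lambda>x. (g x)\<^sup>2 + (sin (\<phi> x))\<^sup>2 / \<beta>\<^sup>2) - \<kappa>/2 * (\<phi> 1 - \<phi> 0)"
proof -
  have g2: "set_integrable lborel {0..1} (\<lambda>t. (g t)\<^sup>2)" using wd unfolding weak_deriv_H1_def by blast
  have s2: "set_integrable lborel {0..1} (\<lambda>t. (sin (\<phi> t))\<^sup>2 / \<beta>\<^sup>2)"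
  proof -
    have "set_integrable lborel {0..1} (\<lambda>t. (sin (\<phi> t))\<^sup>2)"
      unfolding set_integrable_def
      by (rule borel_integrable_compact) (auto intro!: continuous_intros wd_basic(6)[OF wd])
    then show ?thesis by (rule set_integrable_divide)
  qed
  have d: "set_integrable lborel {0..1} (\<lambda>t. (g t)\<^sup>2 + (sin (\<phi> t))\<^sup>2 / \<beta>\<^sup>2)"
    using set_integral_add(1)[OF g2 s2] .
  have "(LINT x:{0..1}|lborel. (g x)\<^sup>2 + (sin (\<phi> x))\<^sup>2 / \<beta>\<^sup>2) = integral {0..1} (\<lambda>x. (g x)\<^sup>2 + (sin (\<phi> x))\<^sup>2 / \<beta>\<^sup>2)"
    using set_borel_integral_eq_integral(2)[OF d] .
  moreover have "(LINT x:{0..1}|lborel. g x) = integral {0..1} g"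
    using set_borel_integral_eq_integral(2)[OF wd_basic(1)[OF wd]] .
  moreover have "integral {0..1} g = \<phi> 1 - \<phi> 0" using wd_basic(5)[OF wd, of 1] by simp
  ultimately show ?thesis unfolding F_energy_def by simp
qed



lemma smooth_wd:
  fixes f f' :: "real \<Rightarrow> real"
  assumes d: "\<And>x. (f has_real_derivative f' x) (at x)" and c: "continuous_on UNIV f'"
  shows "weak_deriv_H1 f f'"
  unfolding weak_deriv_H1_def
proof (intro conjI ballI)
  show "f' \<in> borel_measurable lborel"
    using borel_measurable_continuous_onI[OF c] by (simp add: measurable_lborel1)
  show "set_integrable lborel {0..1} (\<lambda>t. (f' t)\<^sup>2)"
    unfolding set_integrable_def
    by (rule borel_integrable_compact) (auto intro!: continuous_intros continuous_on_subset[OF c])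
  fix x :: real assume x: "x \<in> {0..1}"
  have si: "set_integrable lborel {0..x} f'"
    unfolding set_integrable_def
    by (rule borel_integrable_compact) (auto intro!: continuous_on_subset[OF c])
  have "(LBINT t=0..x. f' t) = (LBINT t=ereal 0..ereal x. f' t)" by (simp only: zero_ereal_def)
  also have "\<dots> = (LBINT t:{0..x}. f' t)" using x by (intro interval_integral_Icc) auto
  also have "\<dots> = integral {0..x} f'" using set_borel_integral_eq_integral(2)[OF si] .
  also have "\<dots> = f x - f 0"
  proof (rule integral_unique, rule fundamental_theorem_of_calculus)
    show "0 \<le> x" using x by auto
    fix y assume "y \<in> {0..x}"
    show "(f has_vector_derivative f' y) (at y within {0..x})"
      using d[of y] by (simp add: has_real_derivative_iff_has_vector_derivative has_vector_derivative_at_within)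
  qed
  finally show "f x = f 0 + (LBINT t=0..x. f' t)" by simp
qed

lemma arctan_le_self: assumes "0 \<le> z" shows "arctan z \<le> z"
proof -
  have "(\<lambda>z. z - arctan z) 0 \<le> (\<lambda>z. z - arctan z) z"
  proof (rule mono_by_deriv[where f'="\<lambda>z. 1 - inverse (1 + z\<^sup>2)" and f="\<lambda>z. z - arctan z" and a=0 and b=z])
    fix x :: real
    show "((\<lambda>z. z - arctan z) has_real_derivative 1 - inverse (1 + x\<^sup>2)) (at x)"
      by (intro derivative_intros DERIV_arctan)
    have "1 \<le> 1 + x\<^sup>2" by simp
    then have "inverse (1 + x\<^sup>2) \<le> 1" by (intro inverse_le_1_iff[THEN iffD2]) auto
    then show "0 \<le> 1 - inverse (1 + x\<^sup>2)" by simp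
  qed (use assms in auto)
  then show ?thesis by simp
qed

lemma sin_2arctan: "sin (2 * arctan z) = 2 * z / (1 + z\<^sup>2)"
proof -
  have p: "0 < 1 + z\<^sup>2" by (simp add: add_pos_nonneg)
  have "sin (2 * arctan z) = 2 * sin (arctan z) * cos (arctan z)" by (rule sin_double)
  also have "\<dots> = 2 * z / (sqrt (1 + z\<^sup>2) * sqrt (1 + z\<^sup>2))"
    by (simp add: sin_arctan cos_arctan)
  also have "sqrt (1 + z\<^sup>2) * sqrt (1 + z\<^sup>2) = 1 + z\<^sup>2"
    using p by simp
  finally show ?thesis .
qed


lemma competitor:
  fixes \<beta> s :: real
  assumes b: "\<beta> > 0" and s: "0 < s" "s < 1"
  shows "\<exists>\<psi> h \<delta>. \<psi> \<in> J_set \<and> weak_deriv_H1 \<psi> h \<and> 0 \<le> \<delta> \<and> \<delta> \<le> 2 * s * exp (-1/\<beta>) \<and>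
      \<psi> 1 = arcsin s - \<delta> \<and> \<psi> 0 = 0 \<and>
      integral {0..1} (\<lambda>x. (h x)\<^sup>2 + (sin (\<psi> x))\<^sup>2 / \<beta>\<^sup>2) \<le> 2 / \<beta> * (1 - cos (arcsin s))"
proof -
  define A where "A = arcsin s"
  have sA: "sin A = s" using s by (simp add: A_def)
  have Ab: "- (pi/2) < A" "A < pi/2" using arcsin_lt_bounded[of s] s by (auto simp: A_def)
  have A0: "0 < A"
  proof (rule ccontr)
    assume "\<not> 0 < A"
    then have "0 \<le> sin (- A)" using Ab by (intro sin_ge_zero) auto
    then have "sin A \<le> 0" by simp
    then show False using sA s by simp
  qed
  have cA: "cos A > 0" using Ab by (intro cos_gt_zero_pi) auto
  define t where "t = tan (A/2)"
  have t0: "0 \<le> t" unfolding t_def using A0 Ab by (intro less_imp_le[OF tan_gt_zero]) auto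
  have ts: "t \<le> s"
  proof -
    have "t = sin A / (cos A + 1)" unfolding t_def using tan_half[of "A/2"] by simp
    also have "\<dots> \<le> sin A" using cA sA s by (simp add: divide_le_eq_1 field_simps)
    finally show ?thesis using sA by simp
  qed
  define u where "u x = 2 * arctan (t * exp ((x - 1) / \<beta>))" for x
  define h where "h x = sin (u x) / \<beta>" for x
  have ud: "(u has_real_derivative h x) (at x)" for x
  proof -
    define z where "z = t * exp ((x - 1) / \<beta>)"
    have "(u has_real_derivative 2 * (inverse (1 + z\<^sup>2) * (t * (exp ((x - 1) / \<beta>) * (1 / \<beta>))))) (at x)"
      unfolding u_def z_def
      using b by (auto intro!: derivative_eq_intros DERIV_arctan[THEN DERIV_chain2] simp: field_simps)
    moreover have "2 * (inverse (1 + z\<^sup>2) * (t * (exp ((x - 1) / \<beta>) * (1 / \<beta>)))) = h x"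
      unfolding h_def u_def sin_2arctan z_def[symmetric]
      by (simp add: z_def field_simps)
    ultimately show ?thesis by simp
  qed
  have hc: "continuous_on UNIV h"
  proof -
    have "continuous_on UNIV u"
      using ud by (meson DERIV_isCont continuous_at_imp_continuous_on)
    then show ?thesis unfolding h_def using b by (intro continuous_intros) auto
  qed
  define \<delta> where "\<delta> = u 0"
  define \<psi> where "\<psi> x = u x - \<delta>" for x
  have wdu: "weak_deriv_H1 u h" by (rule smooth_wd[OF ud hc])
  have wd: "weak_deriv_H1 \<psi> h"
  proof (rule smooth_wd[OF _ hc])
    fix x show "(\<psi> has_real_derivative h x) (at x)"
      unfolding \<psi>_def using ud[of x] by (auto intro!: derivative_eq_intros)
  qed
  have u1: "u 1 = A"
  proof -
    have "arctan t = A / 2" unfolding t_def using Ab by (intro arctan_tan) auto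
    then show ?thesis by (simp add: u_def)
  qed
  have umono: "u x \<le> u y" if "x \<le> y" for x y
    unfolding u_def using that b t0
    by (auto intro!: arctan_monotone' mult_left_mono simp: divide_right_mono)
  have d0: "0 \<le> \<delta>" unfolding \<delta>_def u_def using t0 by simp
  have dle: "\<delta> \<le> 2 * s * exp (-1/\<beta>)"
  proof -
    have "\<delta> \<le> 2 * (t * exp ((0 - 1) / \<beta>))"
      unfolding \<delta>_def u_def using t0 by (intro mult_left_mono arctan_le_self) auto
    also have "\<dots> \<le> 2 * (s * exp ((0 - 1) / \<beta>))"
      using ts by (intro mult_left_mono mult_right_mono) auto
    finally show ?thesis by simp
  qed
  have J: "\<psi> \<in> J_set" unfolding J_set_def H1_def using wd by (auto simp: \<psi>_def \<delta>_def)
  have psi1: "\<psi> 1 = arcsin s - \<delta>" using u1 by (simp add: \<psi>_def A_def)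
  have int_le: "integral {0..1} (\<lambda>x. (h x)\<^sup>2 + (sin (\<psi> x))\<^sup>2 / \<beta>\<^sup>2) \<le> 2 / \<beta> * (1 - cos A)"
  proof -
    have cr: "((\<lambda>x. \<bar>sin (u x)\<bar> * h x) has_integral (Wf (u 1) - Wf (u 0))) {0..1}"
    proof (rule fundamental_theorem_of_calculus)
      fix x :: real assume "x \<in> {0..1}"
      have "((\<lambda>x. Wf (u x)) has_real_derivative \<bar>sin (u x)\<bar> * h x) (at x)"
        by (rule DERIV_chain2[OF Wf_deriv ud])
      then show "((\<lambda>x. Wf (u x)) has_vector_derivative \<bar>sin (u x)\<bar> * h x) (at x within {0..1})"
        by (simp add: has_real_derivative_iff_has_vector_derivative has_vector_derivative_at_within)
    qed auto
    have cr2: "((\<lambda>x. 2 / \<beta> * (\<bar>sin (u x)\<bar> * h x)) has_integral 2 / \<beta> * (Wf (u 1) - Wf (u 0))) {0..1}"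
      using has_integral_mult_right[OF cr] .
    have di: "(\<lambda>x. (h x)\<^sup>2 + (sin (\<psi> x))\<^sup>2 / \<beta>\<^sup>2) integrable_on {0..1}"
      by (rule density_integrable[OF wd]) auto
    have pw: "(h x)\<^sup>2 + (sin (\<psi> x))\<^sup>2 / \<beta>\<^sup>2 \<le> 2 / \<beta> * (\<bar>sin (u x)\<bar> * h x)" if x: "x \<in> {0..1}" for x
    proof -
      have ux: "\<delta> \<le> u x" "u x \<le> A" using umono[of 0 x] umono[of x 1] x u1 by (auto simp: \<delta>_def)
      have sp: "0 \<le> sin (\<psi> x)" unfolding \<psi>_def using ux Ab d0 by (intro sin_ge_zero) auto
      have "sin (\<psi> x) \<le> sin (u x)" unfolding \<psi>_def using ux Ab d0
        by (subst sin_mono_le_eq) auto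
      then have "(sin (\<psi> x))\<^sup>2 \<le> (sin (u x))\<^sup>2" using sp by (intro power_mono) auto
      moreover have "0 \<le> sin (u x)" using ux Ab d0 by (intro sin_ge_zero) auto
      ultimately show ?thesis using b unfolding h_def by (simp add: power2_eq_square field_simps)
    qed
    have "integral {0..1} (\<lambda>x. (h x)\<^sup>2 + (sin (\<psi> x))\<^sup>2 / \<beta>\<^sup>2) \<le> 2 / \<beta> * (Wf (u 1) - Wf (u 0))"
      using has_integral_le[OF integrable_integral[OF di] cr2] pw by auto
    also have "\<dots> \<le> 2 / \<beta> * (1 - cos A)"
    proof -
      have "Wf (u 0) \<ge> 0" using Wf_mono[of 0 "u 0"] d0 by (simp add: \<delta>_def)
      moreover have "Wf (u 1) = 1 - cos A" using u1 A0 Ab by (simp add: Wf_cos)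
      ultimately show ?thesis using b by (intro mult_left_mono) auto
    qed
    finally show ?thesis .
  qed
  show ?thesis
    using J wd d0 dle psi1 int_le by (intro exI[of _ \<psi>] exI[of _ h] exI[of _ \<delta>]) (auto simp: A_def \<psi>_def \<delta>_def)
qed



lemma wd_from_HK:
  fixes \<psi> h :: "real \<Rightarrow> real"
  assumes hm: "h \<in> borel_measurable lborel" and h2: "set_integrable lborel {0..1} (\<lambda>t. (h t)\<^sup>2)"
    and hi: "set_integrable lborel {0..1} h"
    and eq: "\<And>x. x \<in> {0..1} \<Longrightarrow> \<psi> x = \<psi> 0 + integral {0..x} h"
  shows "weak_deriv_H1 \<psi> h"
  unfolding weak_deriv_H1_def
proof (intro conjI ballI hm h2)
  fix x :: real assume x: "x \<in> {0..1}"
  have hx: "set_integrable lborel {0..x} h"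
    by (rule set_integrable_subset[OF hi]) (use x in auto)
  have "(LBINT t=0..x. h t) = (LBINT t=ereal 0..ereal x. h t)" by (simp only: zero_ereal_def)
  also have "\<dots> = (LBINT t:{0..x}. h t)" using x by (intro interval_integral_Icc) auto
  also have "\<dots> = integral {0..x} h" using set_borel_integral_eq_integral(2)[OF hx] .
  finally have L: "(LBINT t=0..x. h t) = integral {0..x} h" .
  show "\<psi> x = \<psi> 0 + (LBINT t=0..x. h t)" unfolding L by (rule eq[OF x])
qed

lemma split3:
  fixes f :: "real \<Rightarrow> real"
  assumes fi: "f integrable_on {0..1}" and x: "0 \<le> x1" "x1 \<le> x2" "x2 \<le> 1"
  shows "integral {0..1} f = integral {0..x1} f + integral {x1..x2} f + integral {x2..1} f"
proof -
  have "integral {0..x2} f + integral {x2..1} f = integral {0..1} f"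
    using Henstock_Kurzweil_Integration.integral_combine[of 0 x2 1 f] fi x by auto
  moreover have "integral {0..x1} f + integral {x1..x2} f = integral {0..x2} f"
    using Henstock_Kurzweil_Integration.integral_combine[of 0 x1 x2 f]
      integrable_on_subinterval[OF fi, of 0 x2] x by auto
  ultimately show ?thesis by simp
qed

lemma replace:
  fixes \<phi> g :: "real \<Rightarrow> real"
  assumes wd: "weak_deriv_H1 \<phi> g" and p0: "\<phi> 0 = 0" and b: "\<beta> > 0"
    and x12: "0 \<le> x1" "x1 \<le> x2" "x2 \<le> 1" and L1: "\<phi> x1 = L" and L2: "\<phi> x2 = L"
    and pot: "\<And>t. t \<in> {x1..x2} \<Longrightarrow> (sin L)\<^sup>2 \<le> (sin (\<phi> t))\<^sup>2"
    and mini: "\<And>\<psi> h. \<psi> \<in> J_set \<Longrightarrow> weak_deriv_H1 \<psi> h \<Longrightarrow> F_energy \<beta> \<kappa> \<phi> g \<le> F_energy \<beta> \<kappa> \<psi> h"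
    and t: "t \<in> {x1..x2}"
  shows "\<phi> t = L"
proof -
  define I where "I = {x1<..<x2}"
  define \<psi> where "\<psi> y = (if y \<in> I then L else \<phi> y)" for y
  define h where "h y = (if y \<in> I then 0 else g y)" for y
  have gm: "g \<in> borel_measurable lborel" and g2: "set_integrable lborel {0..1} (\<lambda>t. (g t)\<^sup>2)"
    using wd unfolding weak_deriv_H1_def by blast+
  have gi: "set_integrable lborel {0..1} g" by (rule wd_basic(1)[OF wd])
  have Im: "I \<inter> space lborel \<in> sets lborel" by (simp add: I_def)
  have hm: "h \<in> borel_measurable lborel"
    unfolding h_def by (rule measurable_If_set[OF _ gm Im]) simp
  have h2: "set_integrable lborel {0..1} (\<lambda>t. (h t)\<^sup>2)"
  proof (rule set_integrable_bound[OF g2])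
    show "set_borel_measurable lborel {0..1} (\<lambda>t. (h t)\<^sup>2)"
      unfolding set_borel_measurable_def using hm by (simp add: measurable_lborel1)
    show "AE x in lborel. x \<in> {0..1} \<longrightarrow> norm ((h x)\<^sup>2) \<le> norm ((g x)\<^sup>2)"
      by (rule AE_I2) (auto simp: h_def)
  qed
  have hi: "set_integrable lborel {0..1} h"
  proof (rule set_integrable_bound[OF gi])
    show "set_borel_measurable lborel {0..1} h"
      unfolding set_borel_measurable_def using hm by (simp add: measurable_lborel1)
    show "AE x in lborel. x \<in> {0..1} \<longrightarrow> norm (h x) \<le> norm (g x)"
      by (rule AE_I2) (auto simp: h_def)
  qed
  have giH: "g integrable_on {0..1}" by (rule wd_basic(2)[OF wd])
  have hiH: "h integrable_on {0..1}" using set_borel_integral_eq_integral(1)[OF hi] .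
  have zeroI: "integral {a..c} h = 0" if "x1 \<le> a" "c \<le> x2" for a c
  proof -
    have "integral {a..c} h = integral {a<..<c} h" by (rule integral_open_interval_real)
    also have "\<dots> = integral {a<..<c} (\<lambda>y. 0)"
      by (rule integral_cong) (use that in \<open>auto simp: h_def I_def\<close>)
    finally show ?thesis by simp
  qed
  have hg: "integral {a..c} h = integral {a..c} g" if "c \<le> x1 \<or> x2 \<le> a" for a c
    by (rule integral_cong) (use that in \<open>auto simp: h_def I_def\<close>)
  have eqpsi: "\<psi> x = \<psi> 0 + integral {0..x} h" if x: "x \<in> {0..1}" for x
  proof -
    have psi0: "\<psi> 0 = 0" using x12 p0 by (simp add: \<psi>_def I_def)
    have phix: "\<phi> y = integral {0..y} g" if "y \<in> {0..1}" for y
      using wd_basic(5)[OF wd that] p0 by simp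
    consider "x \<le> x1" | "x1 < x" "x < x2" | "x2 \<le> x" by linarith
    then show ?thesis
    proof cases
      case 1
      then show ?thesis using hg[of x 0] phix[of x] x psi0 by (auto simp: \<psi>_def I_def)
    next
      case 2
      have "integral {0..x} h = integral {0..x1} h + integral {x1..x} h"
        using Henstock_Kurzweil_Integration.integral_combine[of 0 x1 x h]
          integrable_on_subinterval[OF hiH, of 0 x] x x12 2 by auto
      also have "\<dots> = integral {0..x1} g" using zeroI[of x1 x] hg[of x1 0] 2 by auto
      also have "\<dots> = L" using phix[of x1] x12 L1 by auto
      finally show ?thesis using 2 psi0 by (simp add: \<psi>_def I_def)
    next
      case 3
      have "integral {0..x} h = integral {0..x1} h + integral {x1..x2} h + integral {x2..x} h"
      proof -
        have "integral {0..x2} h + integral {x2..x} h = integral {0..x} h"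
          using Henstock_Kurzweil_Integration.integral_combine[of 0 x2 x h]
            integrable_on_subinterval[OF hiH, of 0 x] x x12 3 by auto
        moreover have "integral {0..x1} h + integral {x1..x2} h = integral {0..x2} h"
          using Henstock_Kurzweil_Integration.integral_combine[of 0 x1 x2 h]
            integrable_on_subinterval[OF hiH, of 0 x2] x x12 by auto
        ultimately show ?thesis by simp
      qed
      also have "\<dots> = integral {0..x1} g + integral {x2..x} g"
        using zeroI[of x1 x2] hg[of x1 0] hg[of x x2] 3 by auto
      also have "integral {x2..x} g = \<phi> x - \<phi> x2"
        using phi_from[OF wd, of x2 x] x x12 3 by auto
      also have "integral {0..x1} g = L" using phix[of x1] x12 L1 by auto
      finally show ?thesis using 3 psi0 L2 by (simp add: \<psi>_def I_def)
    qed
  qed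
  have wdpsi: "weak_deriv_H1 \<psi> h" by (rule wd_from_HK[OF hm h2 hi eqpsi])
  have Jpsi: "\<psi> \<in> J_set"
    unfolding J_set_def H1_def using wdpsi x12 p0 by (auto simp: \<psi>_def I_def)
  have Fle: "F_energy \<beta> \<kappa> \<phi> g \<le> F_energy \<beta> \<kappa> \<psi> h" by (rule mini[OF Jpsi wdpsi])
  have psi01: "\<psi> 0 = \<phi> 0" "\<psi> 1 = \<phi> 1" using x12 by (auto simp: \<psi>_def I_def)
  define d\<phi> where "d\<phi> = (\<lambda>x. (g x)\<^sup>2 + (sin (\<phi> x))\<^sup>2 / \<beta>\<^sup>2)"
  define d\<psi> where "d\<psi> = (\<lambda>x. (h x)\<^sup>2 + (sin (\<psi> x))\<^sup>2 / \<beta>\<^sup>2)"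
  have dpi: "d\<phi> integrable_on {0..1}" unfolding d\<phi>_def by (rule density_integrable[OF wd]) auto
  have dpsi: "d\<psi> integrable_on {0..1}" unfolding d\<psi>_def by (rule density_integrable[OF wdpsi]) auto
  have "integral {0..1} d\<phi> \<le> integral {0..1} d\<psi>"
    using Fle energy_eq[OF wd, of \<beta> \<kappa>] energy_eq[OF wdpsi, of \<beta> \<kappa>] psi01
    by (simp add: d\<phi>_def d\<psi>_def)
  moreover have "integral {0..1} d\<phi> = integral {0..x1} d\<phi> + integral {x1..x2} d\<phi> + integral {x2..1} d\<phi>"
    by (rule split3[OF dpi x12])
  moreover have "integral {0..1} d\<psi> = integral {0..x1} d\<psi> + integral {x1..x2} d\<psi> + integral {x2..1} d\<psi>"
    by (rule split3[OF dpsi x12])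
  moreover have "integral {0..x1} d\<psi> = integral {0..x1} d\<phi>"
    by (rule integral_cong) (auto simp: d\<psi>_def d\<phi>_def h_def \<psi>_def I_def)
  moreover have "integral {x2..1} d\<psi> = integral {x2..1} d\<phi>"
    by (rule integral_cong) (auto simp: d\<psi>_def d\<phi>_def h_def \<psi>_def I_def)
  moreover have "integral {x1..x2} d\<psi> = (x2 - x1) * ((sin L)\<^sup>2 / \<beta>\<^sup>2)"
  proof -
    have "integral {x1..x2} d\<psi> = integral {x1<..<x2} d\<psi>" by (rule integral_open_interval_real)
    also have "\<dots> = integral {x1<..<x2} (\<lambda>y. (sin L)\<^sup>2 / \<beta>\<^sup>2)"
      by (rule integral_cong) (auto simp: d\<psi>_def h_def \<psi>_def I_def)
    also have "\<dots> = integral {x1..x2} (\<lambda>y. (sin L)\<^sup>2 / \<beta>\<^sup>2)" by (rule integral_open_interval_real[symmetric])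
    also have "\<dots> = (x2 - x1) * ((sin L)\<^sup>2 / \<beta>\<^sup>2)" using x12 by simp
    finally show ?thesis .
  qed
  ultimately have mid: "integral {x1..x2} d\<phi> \<le> (x2 - x1) * ((sin L)\<^sup>2 / \<beta>\<^sup>2)" by linarith
  have g2i: "(\<lambda>t. (g t)\<^sup>2) integrable_on {x1..x2}"
    by (rule integrable_on_subinterval[OF wd_basic(4)[OF wd]]) (use x12 in auto)
  have s2i: "(\<lambda>t. (sin (\<phi> t))\<^sup>2 / \<beta>\<^sup>2) integrable_on {x1..x2}"
  proof -
    have "continuous_on {x1..x2} \<phi>"
      by (rule continuous_on_subset[OF wd_basic(6)[OF wd]]) (use x12 in auto)
    then have "(\<lambda>t. (sin (\<phi> t))\<^sup>2) integrable_on {x1..x2}"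
      by (intro integrable_continuous_interval continuous_intros)
    then show ?thesis by (rule integrable_on_divide)
  qed
  have "integral {x1..x2} d\<phi> = integral {x1..x2} (\<lambda>t. (g t)\<^sup>2) + integral {x1..x2} (\<lambda>t. (sin (\<phi> t))\<^sup>2 / \<beta>\<^sup>2)"
    unfolding d\<phi>_def by (rule integral_add[OF g2i s2i])
  moreover have "integral {x1..x2} (\<lambda>t. (sin (\<phi> t))\<^sup>2 / \<beta>\<^sup>2) \<ge> integral {x1..x2} (\<lambda>t. (sin L)\<^sup>2 / \<beta>\<^sup>2)"
    by (rule integral_le[OF _ s2i]) (use pot b in \<open>auto intro: divide_right_mono\<close>)
  moreover have "integral {x1..x2} (\<lambda>t. (sin L)\<^sup>2 / \<beta>\<^sup>2) = (x2 - x1) * ((sin L)\<^sup>2 / \<beta>\<^sup>2)" using x12 by simp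
  ultimately have G0: "integral {x1..x2} (\<lambda>t. (g t)\<^sup>2) \<le> 0" using mid by linarith
  have Gt: "integral {x1..t} (\<lambda>t. (g t)\<^sup>2) \<le> 0"
  proof -
    have "integral {x1..t} (\<lambda>t. (g t)\<^sup>2) \<le> integral {x1..x2} (\<lambda>t. (g t)\<^sup>2)"
      by (rule integral_subset_le) (use t g2i integrable_on_subinterval[OF g2i, of x1 t] in auto)
    then show ?thesis using G0 by simp
  qed
  have "\<bar>\<phi> t - L\<bar> \<le> 1 / (2 * l)" if l: "l > 0" for l
  proof -
    have tt: "0 \<le> x1" "x1 \<le> t" "t \<le> 1" using t x12 by auto
    have gti: "g integrable_on {x1..t}" by (rule integrable_on_subinterval[OF wd_basic(2)[OF wd]]) (use tt in auto)
    have g2ti: "(\<lambda>t. (g t)\<^sup>2) integrable_on {x1..t}" by (rule integrable_on_subinterval[OF g2i]) (use t in auto)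
    have "\<phi> t - L = integral {x1..t} g" using phi_from[OF wd tt] L1 by simp
    also have "\<bar>integral {x1..t} g\<bar> \<le> integral {x1..t} (\<lambda>y. l / 2 * (g y)\<^sup>2 + 1 / (2 * l))"
    proof (rule integral_norm_bound_integral[OF gti, simplified])
      show "(\<lambda>y. l / 2 * (g y)\<^sup>2 + 1 / (2 * l)) integrable_on {x1..t}"
        using integrable_add[OF integrable_on_cmult_left[OF g2ti, of "l/2"] integrable_const_ivl[of "1 / (2 * l)" x1 t]] by simp
      fix y
      have "0 \<le> (l * \<bar>g y\<bar> - 1)\<^sup>2" by simp
      then have "2 * l * \<bar>g y\<bar> \<le> l\<^sup>2 * (g y)\<^sup>2 + 1" by (simp add: power2_eq_square algebra_simps)
      then show "\<bar>g y\<bar> \<le> l / 2 * (g y)\<^sup>2 + 1 / (2 * l)" using l by (simp add: field_simps power2_eq_square)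
    qed
    also have "\<dots> = l / 2 * integral {x1..t} (\<lambda>y. (g y)\<^sup>2) + (t - x1) / (2 * l)"
    proof -
      have a: "(\<lambda>y. l / 2 * (g y)\<^sup>2) integrable_on {x1..t}" using integrable_on_cmult_left[OF g2ti, of "l/2"] by simp
      have "integral {x1..t} (\<lambda>y. l / 2 * (g y)\<^sup>2 + 1 / (2 * l)) = integral {x1..t} (\<lambda>y. l / 2 * (g y)\<^sup>2) + integral {x1..t} (\<lambda>y. 1 / (2 * l))"
        by (rule integral_add[OF a integrable_const_ivl])
      then show ?thesis using tt by simp
    qed
    also have "\<dots> \<le> 1 / (2 * l)"
    proof -
      have "l / 2 * integral {x1..t} (\<lambda>y. (g y)\<^sup>2) \<le> 0" using Gt l by (simp add: mult_nonneg_nonpos)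
      moreover have "(t - x1) / (2 * l) \<le> 1 / (2 * l)" using tt l by (intro divide_right_mono) auto
      ultimately show ?thesis by linarith
    qed
    finally show ?thesis .
  qed
  then have "\<bar>\<phi> t - L\<bar> \<le> 0"
  proof -
    assume H: "\<And>l. l > 0 \<Longrightarrow> \<bar>\<phi> t - L\<bar> \<le> 1 / (2 * l)"
    show ?thesis
    proof (rule ccontr)
      assume "\<not> \<bar>\<phi> t - L\<bar> \<le> 0"
      then have p: "\<bar>\<phi> t - L\<bar> > 0" by simp
      have "\<bar>\<phi> t - L\<bar> \<le> 1 / (2 * (1 / \<bar>\<phi> t - L\<bar>))" using H[of "1 / \<bar>\<phi> t - L\<bar>"] p by simp
      then show False using p by (simp add: field_simps)
    qed
  qed
  then show ?thesis by simp
qed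



lemma antimono_by_deriv:
  fixes f f' :: "real \<Rightarrow> real"
  assumes "\<And>x. a \<le> x \<Longrightarrow> x \<le> b \<Longrightarrow> (f has_real_derivative f' x) (at x)"
    and "\<And>x. a \<le> x \<Longrightarrow> x \<le> b \<Longrightarrow> f' x \<le> 0" and "a \<le> b"
  shows "f b \<le> f a"
proof -
  have "(\<lambda>x. - f x) a \<le> (\<lambda>x. - f x) b"
    by (rule mono_by_deriv[where f'="\<lambda>x. - f' x"]) (use assms in \<open>auto intro!: derivative_intros\<close>)
  then show ?thesis by simp
qed

lemma V_deriv: "((\<lambda>y. Wf y - s * y) has_real_derivative \<bar>sin y\<bar> - s) (at y)"
  by (auto intro!: derivative_eq_intros Wf_deriv)

locale sfix =
  fixes s :: real
  assumes s0: "0 < s" and s1: "s < 2 / pi"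
begin

definition A where "A = arcsin s"
definition Gs where "Gs = 1 - cos A - s * A"

lemma s_lt1: "s < 1"
proof -
  have "2 / pi < 1" using pi_gt3 by (simp add: divide_less_eq)
  then show ?thesis using s1 by linarith
qed

lemma sin_A: "sin A = s" unfolding A_def using s0 s_lt1 by simp

lemma A_bounds: "0 < A" "A < pi/4"
proof -
  have Ab: "- (pi/2) \<le> A" "A \<le> pi/2" using arcsin_bounded[of s] s0 s_lt1 by (auto simp: A_def)
  show "0 < A"
  proof (rule ccontr)
    assume "\<not> 0 < A"
    then have "0 \<le> sin (- A)" using Ab by (intro sin_ge_zero) auto
    then show False using sin_A s0 by simp
  qed
  show "A < pi/4"
  proof (rule ccontr)
    assume "\<not> A < pi/4"
    then have "sin (pi/4) \<le> sin A" using Ab by (subst sin_mono_le_eq) auto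
    then have "sqrt 2 / 2 \<le> s" using sin_A sin_45 by simp
    moreover have "4/3 < sqrt 2"
    proof -
      have "sqrt ((4/3)\<^sup>2) < sqrt 2" by (subst real_sqrt_less_iff) (simp add: power2_eq_square)
      then show ?thesis by simp
    qed
    moreover have "2 / pi < 2 / 3" using pi_gt3 by (simp add: field_simps)
    ultimately show False using s1 by simp
  qed
qed

lemma A_ge_s: "s \<le> A" using sin_x_le_x[of A] A_bounds sin_A by simp

lemma V_on_0pi: "0 \<le> y \<Longrightarrow> y \<le> pi \<Longrightarrow> Wf y - s * y = 1 - cos y - s * y"
  by (simp add: Wf_cos)

lemma Gs_eq: "Gs = Wf A - s * A"
  using A_bounds by (simp add: Gs_def Wf_cos)

lemma quad: assumes y: "0 \<le> y" "y \<le> pi/3" shows "Gs + (y - A)\<^sup>2 / 4 \<le> Wf y - s * y"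
proof -
  define Q where "Q y = Wf y - s * y - (y - A)\<^sup>2 / 4" for y
  define Q' where "Q' y = \<bar>sin y\<bar> - s - (y - A) / 2" for y
  have Qd: "(Q has_real_derivative Q' y) (at y)" for y
    unfolding Q_def Q'_def by (auto intro!: derivative_eq_intros Wf_deriv simp: power2_eq_square field_simps)
  have inc: "sin x - x / 2 \<le> sin z - z / 2" if "0 \<le> x" "x \<le> z" "z \<le> pi/3" for x z
  proof (rule mono_by_deriv[where f="\<lambda>y. sin y - y / 2" and f'="\<lambda>y. cos y - 1/2"])
    fix w assume w: "x \<le> w" "w \<le> z"
    show "((\<lambda>y. sin y - y / 2) has_real_derivative cos w - 1/2) (at w)"
      by (auto intro!: derivative_eq_intros)
    have "cos (pi/3) \<le> cos w" using w that by (intro cos_monotone_0_pi_le) auto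
    then show "0 \<le> cos w - 1/2" by (simp add: cos_60)
  qed (use that in auto)
  have Ab: "0 < A" "A < pi/4" by (rule A_bounds)+
  have sabs: "\<bar>sin w\<bar> = sin w" if "0 \<le> w" "w \<le> pi/3" for w
    using sin_ge_zero[of w] that by auto
  have "Q A \<le> Q y"
  proof (cases "A \<le> y")
    case True
    show ?thesis
    proof (rule mono_by_deriv[OF Qd _ True])
      fix w assume w: "A \<le> w" "w \<le> y"
      have "sin A - A / 2 \<le> sin w - w / 2" using inc[of A w] w Ab y by auto
      then show "0 \<le> Q' w" unfolding Q'_def using sabs[of w] w Ab y sin_A by auto
    qed
  next
    case False
    show ?thesis
    proof (rule antimono_by_deriv[OF Qd])
      fix w assume w: "y \<le> w" "w \<le> A"
      have "sin w - w / 2 \<le> sin A - A / 2" using inc[of w A] w Ab y by auto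
      then show "Q' w \<le> 0" unfolding Q'_def using sabs[of w] w Ab y sin_A by auto
    qed (use False in auto)
  qed
  then show ?thesis unfolding Q_def using Gs_eq by simp
qed

lemma Gs_neg: "Gs \<le> - s\<^sup>2 / 4"
proof -
  have "Gs + (0 - A)\<^sup>2 / 4 \<le> Wf 0 - s * 0" using quad[of 0] by simp
  then have "Gs \<le> - A\<^sup>2 / 4" by simp
  moreover have "s\<^sup>2 \<le> A\<^sup>2" using A_ge_s s0 by (intro power_mono) auto
  ultimately show ?thesis by simp
qed

lemma sin_ge_s: assumes "A \<le> y" "y \<le> pi - A" shows "s \<le> sin y"
proof (cases "y \<le> pi/2")
  case True
  have "sin A \<le> sin y" using assms A_bounds True by (subst sin_mono_le_eq) auto
  then show ?thesis using sin_A by simp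
next
  case False
  have "sin A \<le> sin (pi - y)" using assms A_bounds False by (subst sin_mono_le_eq) auto
  then show ?thesis using sin_A by simp
qed

lemma sin_le_s: assumes "pi - A \<le> y" "y \<le> pi" shows "sin y \<le> s"
proof -
  have "sin (pi - y) \<le> sin A" using assms A_bounds by (subst sin_mono_le_eq) auto
  then show ?thesis using sin_A by simp
qed

lemma V_0pi: assumes "0 \<le> y" "y \<le> pi" shows "Gs + min ((y - A)\<^sup>2 / 4) (min (1/60) (2 - s * pi)) \<le> Wf y - s * y"
proof -
  have Ab: "0 < A" "A < pi/4" by (rule A_bounds)+
  have Gsn: "Gs \<le> 0" using Gs_neg zero_le_power2[of s] by linarith
  consider "y \<le> pi/3" | "pi/3 \<le> y" "y \<le> pi - A" | "pi - A \<le> y" by linarith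
  then show ?thesis
  proof cases
    case 1
    then show ?thesis using quad[of y] assms by linarith
  next
    case 2
    have "Wf (pi/3) - s * (pi/3) \<le> Wf y - s * y"
    proof (rule mono_by_deriv[OF V_deriv])
      fix w assume w: "pi/3 \<le> w" "w \<le> y"
      have "s \<le> sin w" using sin_ge_s[of w] w 2 Ab by auto
      then show "0 \<le> \<bar>sin w\<bar> - s" by simp
    qed (use 2 in auto)
    moreover have "Gs + (pi/3 - A)\<^sup>2 / 4 \<le> Wf (pi/3) - s * (pi/3)" using quad[of "pi/3"] by simp
    moreover have "1/60 \<le> (pi/3 - A)\<^sup>2 / 4"
    proof -
      have "pi/12 \<le> pi/3 - A" using Ab by simp
      moreover have "0.26 \<le> pi/12" using pi_approx(1) by simp
      ultimately have "0.26 \<le> pi/3 - A" by linarith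
      then have "0.26\<^sup>2 \<le> (pi/3 - A)\<^sup>2" by (intro power_mono) auto
      then show ?thesis by (simp add: power2_eq_square)
    qed
    ultimately show ?thesis by linarith
  next
    case 3
    have "Wf pi - s * pi \<le> Wf y - s * y"
    proof (rule antimono_by_deriv[OF V_deriv])
      fix w assume w: "y \<le> w" "w \<le> pi"
      have "sin w \<le> s" using sin_le_s[of w] w 3 by auto
      moreover have "0 \<le> sin w" using w 3 Ab by (intro sin_ge_zero) auto
      ultimately show "\<bar>sin w\<bar> - s \<le> 0" by simp
    qed (use assms in auto)
    then have "2 - s * pi \<le> Wf y - s * y" by (simp add: Wf_pi)
    then show ?thesis using Gsn by linarith
  qed
qed

lemma V_ge_Gs: assumes "0 \<le> y" shows "Gs \<le> Wf y - s * y"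
proof -
  have sp: "0 < 2 - s * pi" using s1 pi_gt_zero by (simp add: field_simps)
  have "\<forall>y. 0 \<le> y \<and> y \<le> real (Suc n) * pi \<longrightarrow> Gs \<le> Wf y - s * y" for n
  proof (induction n)
    case 0
    show ?case
    proof (intro allI impI)
      fix y assume y: "0 \<le> y \<and> y \<le> real (Suc 0) * pi"
      have y0: "0 \<le> y" and ypi: "y \<le> pi" using y by auto
      have m0: "0 \<le> min ((y - A)\<^sup>2 / 4) (min (1/60) (2 - s * pi))" using sp by simp
      have "Gs + min ((y - A)\<^sup>2 / 4) (min (1/60) (2 - s * pi)) \<le> Wf y - s * y"
        by (rule V_0pi[OF y0 ypi])
      then show "Gs \<le> Wf y - s * y" using m0 by linarith
    qed
  next
    case (Suc n)
    show ?case
    proof (intro allI impI)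
      fix y assume y: "0 \<le> y \<and> y \<le> real (Suc (Suc n)) * pi"
      show "Gs \<le> Wf y - s * y"
      proof (cases "y \<le> real (Suc n) * pi")
        case True then show ?thesis using Suc.IH y by auto
      next
        case False
        define N where "N = pi * real n"
        have pn: "0 \<le> N" by (simp add: N_def)
        have e1: "real (Suc n) * pi = pi + N" by (simp add: algebra_simps N_def)
        have e2: "real (Suc (Suc n)) * pi = 2 * pi + N" by (simp add: algebra_simps N_def)
        have y1: "y \<le> 2 * pi + N" using y e2 by simp
        have y2: "pi + N < y" using False e1 by simp
        have y': "0 \<le> y - pi" "y - pi \<le> real (Suc n) * pi"
          using pn y1 y2 e1 by linarith+
        have "Wf y = Wf (y - pi) + 2" using Wf_shift[of "y - pi"] by simp
        then have "Wf y - s * y = (Wf (y - pi) - s * (y - pi)) + (2 - s * pi)" by (simp add: algebra_simps)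
        moreover have "Gs \<le> Wf (y - pi) - s * (y - pi)" using Suc.IH y' by blast
        ultimately show ?thesis using sp by linarith
      qed
    qed
  qed
  note allf = this
  obtain n where "y / pi \<le> real n" using real_arch_simple by blast
  then have "y \<le> pi * real n" using pi_gt_zero by (simp add: field_simps)
  moreover have "real (Suc n) * pi = pi + pi * real n" by (simp add: algebra_simps)
  ultimately have "y \<le> real (Suc n) * pi" using pi_gt_zero by linarith
  then show ?thesis using allf assms by blast
qed

lemma V_big: assumes "pi \<le> y" shows "Gs + (2 - s * pi) \<le> Wf y - s * y"
proof -
  have "Wf y = Wf (y - pi) + 2" using Wf_shift[of "y - pi"] by simp
  then have "Wf y - s * y = (Wf (y - pi) - s * (y - pi)) + (2 - s * pi)" by (simp add: algebra_simps)
  then show ?thesis using V_ge_Gs[of "y - pi"] assms by simp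
qed

lemma R1:
  assumes ineq: "\<bar>Wf a\<bar> - s * a \<le> Gs + e"
    and e1: "e < s\<^sup>2 / 4" and e2: "e < 1/60" and e3: "e < 2 - s * pi"
  shows "0 \<le> a" "a \<le> pi/3" "(a - A)\<^sup>2 \<le> 4 * e"
proof -
  show a0: "0 \<le> a"
  proof (rule ccontr)
    assume "\<not> 0 \<le> a"
    then have "s * a < 0" using s0 by (simp add: mult_pos_neg)
    then have "0 \<le> \<bar>Wf a\<bar> - s * a" using abs_ge_zero[of "Wf a"] by linarith
    then show False using ineq e1 Gs_neg by linarith
  qed
  have Wa: "\<bar>Wf a\<bar> = Wf a" using Wf_mono[of 0 a] a0 by simp
  have "a \<le> pi"
  proof (rule ccontr)
    assume "\<not> a \<le> pi"
    then show False using V_big[of a] ineq Wa e3 by simp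
  qed
  then have m: "Gs + min ((a - A)\<^sup>2 / 4) (min (1/60) (2 - s * pi)) \<le> Gs + e"
    using V_0pi[of a] a0 ineq Wa by simp
  then have q: "(a - A)\<^sup>2 / 4 \<le> e" using e2 e3 by (simp add: min_def split: if_splits)
  then show "(a - A)\<^sup>2 \<le> 4 * e" by simp
  show "a \<le> pi/3"
  proof (rule ccontr)
    assume "\<not> a \<le> pi/3"
    then have "Gs + min ((a - A)\<^sup>2 / 4) (min (1/60) (2 - s * pi)) \<le> Wf a - s * a"
      using V_0pi[of a] \<open>a \<le> pi\<close> by simp
    have Ab: "0 < A" "A < pi/4" by (rule A_bounds)+
    have "pi/12 \<le> a - A" using \<open>\<not> a \<le> pi/3\<close> Ab by simp
    moreover have "0.26 \<le> pi/12" using pi_approx(1) by simp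
    ultimately have "0.26 \<le> a - A" by linarith
    then have "0.26\<^sup>2 \<le> (a - A)\<^sup>2" by (intro power_mono) auto
    then show False using q e2 by (simp add: power2_eq_square)
  qed
qed

lemma R2:
  assumes ineq: "\<bar>Wf y\<bar> + \<bar>Wf a - Wf y\<bar> - s * a \<le> Gs + e"
    and a: "0 \<le> a" "a \<le> pi/3" and e: "e < 2"
  shows "y < 2 * pi / 3"
proof (rule ccontr)
  assume "\<not> y < 2 * pi / 3"
  then have y: "2 * pi / 3 \<le> y" by simp
  have W23: "Wf (2 * pi / 3) = 3/2"
  proof -
    have "cos (2 * pi / 3) = cos (pi - pi / 3)" by simp
    also have "\<dots> = - 1/2" by (simp only: cos_pi_minus cos_60)
    finally show ?thesis by (subst Wf_cos) auto
  qed
  have W13: "Wf (pi / 3) = 1/2" by (subst Wf_cos) (auto simp: cos_60)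
  have "3/2 \<le> Wf y" using Wf_mono[OF y] W23 by simp
  moreover have "Wf a \<le> 1/2" using Wf_mono[OF a(2)] W13 by simp
  moreover have "Gs \<le> Wf a - s * a" using V_ge_Gs[OF a(1)] .
  moreover have "0 \<le> Wf a" using Wf_mono[OF a(1)] by simp
  ultimately have "\<bar>Wf y\<bar> = Wf y" "\<bar>Wf a - Wf y\<bar> = Wf y - Wf a" by auto
  then show False using ineq e \<open>3/2 \<le> Wf y\<close> \<open>Wf a \<le> 1/2\<close> \<open>Gs \<le> Wf a - s * a\<close> by linarith
qed

end



lemma last_hit:
  fixes f :: "real \<Rightarrow> real"
  assumes fc: "continuous_on {u..v} f" and uv: "u \<le> v" and fu: "f u \<le> c" and fv: "c < f v"
  shows "\<exists>x1\<in>{u..v}. f x1 = c \<and> (\<forall>t\<in>{x1<..v}. c < f t)"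
proof -
  define S where "S = {u..v} \<inter> f -` {c}"
  have cl: "closed S" unfolding S_def by (rule continuous_closed_preimage[OF fc]) auto
  have "compact S" using cl unfolding S_def by (meson bounded_Int bounded_closed_interval compact_eq_bounded_closed)
  moreover have "S \<noteq> {}"
  proof -
    obtain x where "u \<le> x" "x \<le> v" "f x = c" using IVT'[of f u c v, OF fu _ uv fc] fv by auto
    then show ?thesis unfolding S_def by auto
  qed
  ultimately obtain x1 where x1: "x1 \<in> S" and mx: "\<And>y. y \<in> S \<Longrightarrow> y \<le> x1"
    using compact_attains_sup by metis
  have "c < f t" if t: "t \<in> {x1<..v}" for t
  proof (rule ccontr)
    assume "\<not> c < f t"
    then have "f t \<le> c" by simp
    moreover have "continuous_on {t..v} f" by (rule continuous_on_subset[OF fc]) (use x1 t in \<open>auto simp: S_def\<close>)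
    ultimately obtain y where "t \<le> y" "y \<le> v" "f y = c" using IVT'[of f t c v] fv t by auto
    then have "y \<in> S" using x1 t by (auto simp: S_def)
    then show False using mx \<open>t \<le> y\<close> t by force
  qed
  then show ?thesis using x1 by (auto simp: S_def)
qed

lemma first_hit:
  fixes f :: "real \<Rightarrow> real"
  assumes fc: "continuous_on {u..v} f" and uv: "u \<le> v" and fu: "c < f u" and fv: "f v \<le> c"
  shows "\<exists>x2\<in>{u..v}. f x2 = c \<and> (\<forall>t\<in>{u..<x2}. c < f t)"
proof -
  define S where "S = {u..v} \<inter> f -` {c}"
  have cl: "closed S" unfolding S_def by (rule continuous_closed_preimage[OF fc]) auto
  have "compact S" using cl unfolding S_def by (meson bounded_Int bounded_closed_interval compact_eq_bounded_closed)
  moreover have "S \<noteq> {}"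
  proof -
    obtain x where "u \<le> x" "x \<le> v" "f x = c" using IVT2'[of f v c u, OF fv _ uv fc] fu by auto
    then show ?thesis unfolding S_def by auto
  qed
  ultimately obtain x2 where x2: "x2 \<in> S" and mx: "\<And>y. y \<in> S \<Longrightarrow> x2 \<le> y"
    using compact_attains_inf by metis
  have "c < f t" if t: "t \<in> {u..<x2}" for t
  proof (rule ccontr)
    assume "\<not> c < f t"
    then have "f t \<le> c" by simp
    moreover have "continuous_on {u..t} f" by (rule continuous_on_subset[OF fc]) (use x2 t in \<open>auto simp: S_def\<close>)
    ultimately obtain y where "u \<le> y" "y \<le> t" "f y = c" using IVT2'[of f t c u] fu t by auto
    then have "y \<in> S" using x2 t by (auto simp: S_def)
    then show False using mx \<open>y \<le> t\<close> t by force
  qed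
  then show ?thesis using x2 by (auto simp: S_def)
qed



lemma per_beta:
  fixes \<phi> :: "real \<Rightarrow> real"
  assumes b: "\<beta> > 0" and k: "\<kappa> > 0" and ks: "\<kappa> * \<beta> < 1/pi" and mini: "is_minimizer \<beta> \<kappa> \<phi>"
  shows "\<exists>g. weak_deriv_H1 \<phi> g \<and> \<phi> 0 = 0 \<and>
     (\<forall>\<psi> h. \<psi> \<in> J_set \<longrightarrow> weak_deriv_H1 \<psi> h \<longrightarrow> F_energy \<beta> \<kappa> \<phi> g \<le> F_energy \<beta> \<kappa> \<psi> h) \<and>
     (\<forall>x\<in>{0..1}. \<bar>Wf (\<phi> x)\<bar> + \<bar>Wf (\<phi> 1) - Wf (\<phi> x)\<bar> - (2*\<kappa>*\<beta>) * \<phi> 1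
         \<le> sfix.Gs (2*\<kappa>*\<beta>) + 2 * (2*\<kappa>*\<beta>)\<^sup>2 * exp (-1/\<beta>))"
proof -
  define s where "s = 2*\<kappa>*\<beta>"
  have s0: "0 < s" using b k by (simp add: s_def)
  have s1: "s < 2 / pi" using ks by (simp add: s_def field_simps)
  interpret S: sfix s using s0 s1 by unfold_locales
  obtain g where J: "\<phi> \<in> J_set" and wd: "weak_deriv_H1 \<phi> g"
    and mn: "\<forall>\<psi> h. \<psi> \<in> J_set \<longrightarrow> weak_deriv_H1 \<psi> h \<longrightarrow> F_energy \<beta> \<kappa> \<phi> g \<le> F_energy \<beta> \<kappa> \<psi> h"
    using mini unfolding is_minimizer_def by blast
  have p0: "\<phi> 0 = 0" using J by (simp add: J_set_def)
  obtain \<psi> h \<delta> where Jp: "\<psi> \<in> J_set" and wdp: "weak_deriv_H1 \<psi> h" and d0: "0 \<le> \<delta>"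
    and dle: "\<delta> \<le> 2 * s * exp (-1/\<beta>)" and p1: "\<psi> 1 = arcsin s - \<delta>" and pp0: "\<psi> 0 = 0"
    and Ip: "integral {0..1} (\<lambda>x. (h x)\<^sup>2 + (sin (\<psi> x))\<^sup>2 / \<beta>\<^sup>2) \<le> 2 / \<beta> * (1 - cos (arcsin s))"
    using competitor[OF b s0 S.s_lt1] by blast
  have Fle: "F_energy \<beta> \<kappa> \<phi> g \<le> F_energy \<beta> \<kappa> \<psi> h" using mn Jp wdp by blast
  have star: "\<bar>Wf (\<phi> x)\<bar> + \<bar>Wf (\<phi> 1) - Wf (\<phi> x)\<bar> - s * \<phi> 1 \<le> S.Gs + 2 * s\<^sup>2 * exp (-1/\<beta>)"
    if x: "x \<in> {0..1}" for x
  proof -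
    define T where "T = \<bar>Wf (\<phi> x)\<bar> + \<bar>Wf (\<phi> 1) - Wf (\<phi> x)\<bar>"
    define d where "d = (\<lambda>t. (g t)\<^sup>2 + (sin (\<phi> t))\<^sup>2 / \<beta>\<^sup>2)"
    have di: "d integrable_on {0..1}" unfolding d_def by (rule density_integrable[OF wd]) auto
    have "integral {0..x} d + integral {x..1} d = integral {0..1} d"
      using Henstock_Kurzweil_Integration.integral_combine[of 0 x 1 d] di x by auto
    moreover have "2 / \<beta> * \<bar>Wf (\<phi> x) - Wf (\<phi> 0)\<bar> \<le> integral {0..x} d"
      unfolding d_def by (rule calib[OF wd b]) (use x in auto)
    moreover have "2 / \<beta> * \<bar>Wf (\<phi> 1) - Wf (\<phi> x)\<bar> \<le> integral {x..1} d"
      unfolding d_def by (rule calib[OF wd b]) (use x in auto)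
    ultimately have IT: "2 / \<beta> * T \<le> integral {0..1} d"
      using p0 by (simp add: T_def distrib_left)
    have "1/8 * (2 / \<beta> * T) - \<kappa>/2 * \<phi> 1 \<le> 1/8 * (2 / \<beta> * (1 - cos (arcsin s))) - \<kappa>/2 * (arcsin s - \<delta>)"
    proof -
      have "1/8 * (2 / \<beta> * T) - \<kappa>/2 * \<phi> 1 \<le> 1/8 * integral {0..1} d - \<kappa>/2 * (\<phi> 1 - \<phi> 0)"
        using IT p0 by simp
      also have "\<dots> = F_energy \<beta> \<kappa> \<phi> g" unfolding d_def by (rule energy_eq[OF wd, symmetric])
      also have "\<dots> \<le> F_energy \<beta> \<kappa> \<psi> h" by (rule Fle)
      also have "\<dots> = 1/8 * integral {0..1} (\<lambda>x. (h x)\<^sup>2 + (sin (\<psi> x))\<^sup>2 / \<beta>\<^sup>2) - \<kappa>/2 * (\<psi> 1 - \<psi> 0)"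
        by (rule energy_eq[OF wdp])
      also have "\<dots> \<le> 1/8 * (2 / \<beta> * (1 - cos (arcsin s))) - \<kappa>/2 * (arcsin s - \<delta>)"
        using mult_left_mono[OF Ip, of "1/8"] p1 pp0 by simp
      finally show ?thesis .
    qed
    then have "4 * \<beta> * (1/8 * (2 / \<beta> * T) - \<kappa>/2 * \<phi> 1) \<le> 4 * \<beta> * (1/8 * (2 / \<beta> * (1 - cos (arcsin s))) - \<kappa>/2 * (arcsin s - \<delta>))"
      using b by (intro mult_left_mono) auto
    moreover have "4 * \<beta> * (1/8 * (2 / \<beta> * T) - \<kappa>/2 * \<phi> 1) = T - s * \<phi> 1"
      using b by (simp add: s_def field_simps)
    moreover have "4 * \<beta> * (1/8 * (2 / \<beta> * (1 - cos (arcsin s))) - \<kappa>/2 * (arcsin s - \<delta>)) = (1 - cos (arcsin s)) - s * (arcsin s - \<delta>)"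
      using b by (simp add: s_def field_simps)
    ultimately have "T - s * \<phi> 1 \<le> (1 - cos (arcsin s)) - s * (arcsin s - \<delta>)"
      by simp
    also have "\<dots> = S.Gs + s * \<delta>" by (simp add: S.Gs_def S.A_def algebra_simps)
    also have "s * \<delta> \<le> s * (2 * s * exp (-1/\<beta>))" using s0 dle by (intro mult_left_mono) auto
    finally show ?thesis by (simp add: T_def power2_eq_square algebra_simps)
  qed
  show ?thesis using wd p0 mn star by (auto simp: s_def)
qed


lemma per_beta_concl:
  fixes \<phi> :: "real \<Rightarrow> real"
  assumes b: "\<beta> > 0" and k: "\<kappa> > 0" and ks: "\<kappa> * \<beta> < 1/pi" and mini: "is_minimizer \<beta> \<kappa> \<phi>"
    and eta1: "exp (-1/\<beta>) < 1/240" and eta2: "exp (-1/\<beta>) < (2 - 2*\<kappa>*\<beta>*pi) / 2"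
  shows "0 \<le> \<phi> 1" "\<phi> 1 \<le> pi/3" "(\<phi> 1 - arcsin (2*\<kappa>*\<beta>))\<^sup>2 \<le> 8 * (2*\<kappa>*\<beta>)\<^sup>2 * exp (-1/\<beta>)"
    "\<forall>x\<in>{0..1}. 0 \<le> \<phi> x \<and> \<phi> x \<le> \<phi> 1"
proof -
  define s where "s = 2*\<kappa>*\<beta>"
  define \<eta> where "\<eta> = exp (-1/\<beta>)"
  define e where "e = 2 * s\<^sup>2 * \<eta>"
  have s0: "0 < s" using b k by (simp add: s_def)
  have s1: "s < 2 / pi" using ks by (simp add: s_def field_simps)
  interpret S: sfix s using s0 s1 by unfold_locales
  have eta0: "0 < \<eta>" by (simp add: \<eta>_def)
  have ss1: "s\<^sup>2 < 1" using s0 S.s_lt1 by (simp add: power_less_one_iff abs_less_iff power2_eq_square)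
       (metis less_trans mult_strict_mono' order_less_imp_le mult_1_right S.s_lt1)
  have e1: "e < s\<^sup>2 / 4"
  proof -
    have "s\<^sup>2 > 0" using s0 by simp
    then show ?thesis using eta1 unfolding e_def \<eta>_def by (simp add: field_simps)
  qed
  have e2: "e < 1/60"
  proof -
    have "e \<le> 2 * 1 * \<eta>" unfolding e_def using ss1 eta0 by (intro mult_right_mono mult_left_mono) auto
    then show ?thesis using eta1 by (simp add: \<eta>_def)
  qed
  have e3: "e < 2 - s * pi"
  proof -
    have "e \<le> 2 * 1 * \<eta>" unfolding e_def using ss1 eta0 by (intro mult_right_mono mult_left_mono) auto
    then show ?thesis using eta2 by (simp add: \<eta>_def s_def field_simps)
  qed
  obtain g where wd: "weak_deriv_H1 \<phi> g" and p0: "\<phi> 0 = 0"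
    and mn: "\<forall>\<psi> h. \<psi> \<in> J_set \<longrightarrow> weak_deriv_H1 \<psi> h \<longrightarrow> F_energy \<beta> \<kappa> \<phi> g \<le> F_energy \<beta> \<kappa> \<psi> h"
    and star: "\<And>x. x \<in> {0..1} \<Longrightarrow> \<bar>Wf (\<phi> x)\<bar> + \<bar>Wf (\<phi> 1) - Wf (\<phi> x)\<bar> - s * \<phi> 1 \<le> S.Gs + e"
    using per_beta[OF b k ks mini] unfolding s_def[symmetric] e_def \<eta>_def by blast
  have star0: "\<bar>Wf (\<phi> 1)\<bar> - s * \<phi> 1 \<le> S.Gs + e" using star[of 0] p0 by simp
  show a0: "0 \<le> \<phi> 1" and a1: "\<phi> 1 \<le> pi/3" using S.R1[OF star0 e1 e2 e3] by auto
  have "(\<phi> 1 - S.A)\<^sup>2 \<le> 4 * e" using S.R1[OF star0 e1 e2 e3] by auto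
  moreover have Aeq: "S.A = arcsin (2*\<kappa>*\<beta>)" using S.A_def by (simp add: s_def)
  ultimately show "(\<phi> 1 - arcsin (2*\<kappa>*\<beta>))\<^sup>2 \<le> 8 * (2*\<kappa>*\<beta>)\<^sup>2 * exp (-1/\<beta>)"
    by (simp add: e_def s_def \<eta>_def)
  have lt23: "\<phi> x < 2 * pi / 3" if "x \<in> {0..1}" for x
    using S.R2[OF star[OF that] a0 a1] e2 by simp
  have pc: "continuous_on {0..1} \<phi>" by (rule wd_basic(6)[OF wd])
  have mini': "\<And>\<psi> h. \<psi> \<in> J_set \<Longrightarrow> weak_deriv_H1 \<psi> h \<Longrightarrow> F_energy \<beta> \<kappa> \<phi> g \<le> F_energy \<beta> \<kappa> \<psi> h"
    using mn by blast
  show "\<forall>x\<in>{0..1}. 0 \<le> \<phi> x \<and> \<phi> x \<le> \<phi> 1"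
  proof (intro ballI conjI)
    fix x0 :: real assume x0: "x0 \<in> {0..1}"
    show "0 \<le> \<phi> x0"
    proof (rule ccontr)
      assume "\<not> 0 \<le> \<phi> x0"
      then have neg: "\<phi> x0 < 0" by simp
      obtain x2 where x2: "x0 \<le> x2" "x2 \<le> 1" "\<phi> x2 = 0"
        using IVT'[of \<phi> x0 0 1] neg a0 x0 continuous_on_subset[OF pc, of "{x0..1}"] by auto
      have "\<phi> x0 = 0"
        by (rule replace[OF wd p0 b _ _ x2(2) _ x2(3) _ mini', of 0]) (use x0 x2 p0 in auto)
      then show False using neg by simp
    qed
    show "\<phi> x0 \<le> \<phi> 1"
    proof (rule ccontr)
      assume "\<not> \<phi> x0 \<le> \<phi> 1"
      then have big: "\<phi> 1 < \<phi> x0" by simp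
      obtain x1 where x1: "x1 \<in> {0..x0}" "\<phi> x1 = \<phi> 1" and r1: "\<forall>t\<in>{x1<..x0}. \<phi> 1 < \<phi> t"
        using last_hit[of 0 x0 \<phi> "\<phi> 1"] continuous_on_subset[OF pc, of "{0..x0}"] x0 p0 a0 big by auto
      obtain x2 where x2: "x2 \<in> {x0..1}" "\<phi> x2 = \<phi> 1" and r2: "\<forall>t\<in>{x0..<x2}. \<phi> 1 < \<phi> t"
        using first_hit[of x0 1 \<phi> "\<phi> 1"] continuous_on_subset[OF pc, of "{x0..1}"] x0 big by auto
      have ge: "\<phi> 1 \<le> \<phi> t" if t: "t \<in> {x1..x2}" for t
      proof -
        consider "t = x1" | "x1 < t" "t \<le> x0" | "x0 \<le> t" "t < x2" | "t = x2" using t by fastforce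
        then show ?thesis
        proof cases
          case 1 then show ?thesis using x1 by simp
        next
          case 2
          then have "t \<in> {x1<..x0}" by simp
          then have "\<phi> 1 < \<phi> t" using r1 by blast
          then show ?thesis by simp
        next
          case 3
          then have "t \<in> {x0..<x2}" by simp
          then have "\<phi> 1 < \<phi> t" using r2 by blast
          then show ?thesis by simp
        next
          case 4 then show ?thesis using x2 by simp
        qed
      qed
      have pot: "(sin (\<phi> 1))\<^sup>2 \<le> (sin (\<phi> t))\<^sup>2" if t: "t \<in> {x1..x2}" for t
      proof -
        have t01: "t \<in> {0..1}" using t x1 x2 x0 by auto
        have lo: "\<phi> 1 \<le> \<phi> t" using ge[OF t] .
        have hi: "\<phi> t < 2 * pi / 3" using lt23[OF t01] .
        have s1n: "0 \<le> sin (\<phi> 1)" using a0 a1 by (intro sin_ge_zero) auto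
        have "sin (\<phi> 1) \<le> sin (\<phi> t)"
        proof (cases "\<phi> t \<le> pi/2")
          case True
          then show ?thesis using lo a0 a1 by (subst sin_mono_le_eq) auto
        next
          case False
          have "sin (\<phi> 1) \<le> sin (pi - \<phi> t)" using False hi a0 a1 by (subst sin_mono_le_eq) auto
          then show ?thesis by simp
        qed
        then show ?thesis using s1n by (intro power_mono) auto
      qed
      have "\<phi> x0 = \<phi> 1"
        by (rule replace[OF wd p0 b _ _ _ x1(2) x2(2) pot mini']) (use x0 x1 x2 in auto)
      then show False using big by simp
    qed
  qed
qed



lemma one_minus_cos_le: assumes "0 \<le> (x::real)" shows "1 - cos x \<le> x\<^sup>2 / 2"
proof -
  have "(\<lambda>x. x\<^sup>2 / 2 - 1 + cos x) 0 \<le> (\<lambda>x. x\<^sup>2 / 2 - 1 + cos x) x"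
  proof (rule mono_by_deriv[where f="\<lambda>x. x\<^sup>2 / 2 - 1 + cos x" and f'="\<lambda>x. x - sin x" and a=0 and b=x])
    fix y :: real assume "0 \<le> y"
    then show "0 \<le> y - sin y" using sin_x_le_x[of y] by simp
    show "((\<lambda>x. x\<^sup>2 / 2 - 1 + cos x) has_real_derivative y - sin y) (at y)"
      by (auto intro!: derivative_eq_intros simp: power2_eq_square)
  qed (use assms in auto)
  then show ?thesis by simp
qed

lemma x_minus_sin_le: assumes "0 \<le> (x::real)" shows "x - sin x \<le> x ^ 3 / 6"
proof -
  have "(\<lambda>x. x ^ 3 / 6 - x + sin x) 0 \<le> (\<lambda>x. x ^ 3 / 6 - x + sin x) x"
  proof (rule mono_by_deriv[where f="\<lambda>x. x ^ 3 / 6 - x + sin x" and f'="\<lambda>x. x\<^sup>2 / 2 - 1 + cos x" and a=0 and b=x])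
    fix y :: real assume "0 \<le> y"
    then show "0 \<le> y\<^sup>2 / 2 - 1 + cos y" using one_minus_cos_le[of y] by simp
    show "((\<lambda>x. x ^ 3 / 6 - x + sin x) has_real_derivative y\<^sup>2 / 2 - 1 + cos y) (at y)"
      by (auto intro!: derivative_eq_intros simp: power2_eq_square)
  qed (use assms in auto)
  then show ?thesis by simp
qed

context sfix begin

lemma A_minus_s: "A - s \<le> 4 * s ^ 3 / 3"
proof -
  have Ab: "0 < A" "A < pi/4" by (rule A_bounds)+
  have A1: "A < 1" using Ab pi_less_4 by simp
  have c: "A - s \<le> A ^ 3 / 6" using x_minus_sin_le[of A] Ab sin_A by simp
  have "A ^ 3 \<le> A * 1" 
  proof -
    have "A ^ 3 = A * A\<^sup>2" by (simp add: power3_eq_cube power2_eq_square)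
    moreover have "A\<^sup>2 \<le> 1" using Ab A1 by (simp add: power_le_one)
    ultimately show ?thesis using Ab by (simp add: mult_left_mono)
  qed
  then have "A \<le> 2 * s" using c s0 by simp
  then have "A ^ 3 \<le> (2 * s) ^ 3" using Ab by (intro power_mono) auto
  then show ?thesis using c by (simp add: power_mult_distrib)
qed

end

lemma sq_le_imp_abs_le: "(x::real)\<^sup>2 \<le> y\<^sup>2 \<Longrightarrow> 0 \<le> y \<Longrightarrow> \<bar>x\<bar> \<le> y"
  using abs_le_square_iff[of x y] by simp

theorem proposition3:
  fixes \<kappa> :: "real \<Rightarrow> real" and \<phi> :: "real \<Rightarrow> real \<Rightarrow> real"
  assumes kpos: "\<And>\<beta>. \<beta> > 0 \<Longrightarrow> \<kappa> \<beta> > 0"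
    and ksmall: "\<And>\<beta>. \<beta> > 0 \<Longrightarrow> \<kappa> \<beta> * \<beta> < 1 / pi"
    and mini: "\<And>\<beta>. \<beta> > 0 \<Longrightarrow> is_minimizer \<beta> (\<kappa> \<beta>) (\<phi> \<beta>)"
  shows "((\<exists>c. \<forall>\<beta>>0. \<kappa> \<beta> * \<beta> = c) \<longrightarrow>
            (\<forall>n::nat. n \<ge> 1 \<longrightarrow>
               (\<lambda>\<beta>. \<phi> \<beta> 1 - arcsin (2 * \<kappa> \<beta> * \<beta>)) \<in> o[at_right 0](\<lambda>\<beta>. \<beta> ^ n)) \<and>
            (\<forall>\<^sub>F \<beta> in at_right 0. \<forall>x\<in>{0..1}.
               0 \<le> \<phi> \<beta> x \<and> \<phi> \<beta> x \<le> \<phi> \<beta> 1 \<and> \<phi> \<beta> 1 < pi / 2))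
       \<and> (((\<lambda>\<beta>. \<kappa> \<beta> * \<beta>) \<longlongrightarrow> 0) (at_right 0) \<longrightarrow>
            (\<lambda>\<beta>. \<phi> \<beta> 1 - 2 * \<kappa> \<beta> * \<beta>) \<in> o[at_right 0](\<lambda>\<beta>. \<kappa> \<beta> * \<beta>))"
proof (intro conjI impI)
  have etalim: "((\<lambda>\<beta>::real. exp (-1/\<beta>)) \<longlongrightarrow> 0) (at_right 0)" by real_asymp
  have ev_eta: "\<forall>\<^sub>F \<beta> in at_right 0. exp (-1/\<beta>) < r" if "r > 0" for r :: real
    using order_tendstoD(2)[OF etalim that] .
  have pos: "\<forall>\<^sub>F \<beta> in at_right (0::real). 0 < \<beta>" by (rule eventually_at_right_less)
  have ev240: "\<forall>\<^sub>F \<beta> in at_right (0::real). exp (-1/\<beta>) < 1/240" using ev_eta[of "1/240"] by simp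
  {
    assume "\<exists>c. \<forall>\<beta>>0. \<kappa> \<beta> * \<beta> = c"
    then obtain c where c: "\<And>\<beta>. \<beta> > 0 \<Longrightarrow> \<kappa> \<beta> * \<beta> = c" by blast
    have c0: "0 < c" using c[of 1] kpos[of 1] by simp
    have c1: "c < 1/pi" using c[of 1] ksmall[of 1] by simp
    have gap: "0 < (2 - 2 * c * pi) / 2" using c1 pi_gt_zero by (simp add: field_simps)
    define P where "P \<beta> \<longleftrightarrow> 0 < \<beta> \<and> exp (-1/\<beta>) < 1/240 \<and> exp (-1/\<beta>) < (2 - 2 * c * pi) / 2" for \<beta> :: real
    have evP: "\<forall>\<^sub>F \<beta> in at_right 0. P \<beta>"
      unfolding P_def using pos ev240 ev_eta[OF gap] by eventually_elim auto
    have concl: "0 \<le> \<phi> \<beta> 1 \<and> \<phi> \<beta> 1 \<le> pi/3 \<and> (\<phi> \<beta> 1 - arcsin (2 * \<kappa> \<beta> * \<beta>))\<^sup>2 \<le> 8 * (2 * c)\<^sup>2 * exp (-1/\<beta>)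
       \<and> (\<forall>x\<in>{0..1}. 0 \<le> \<phi> \<beta> x \<and> \<phi> \<beta> x \<le> \<phi> \<beta> 1)" if "P \<beta>" for \<beta>
    proof -
      have b: "\<beta> > 0" using that by (simp add: P_def)
      have ee: "2 * \<kappa> \<beta> * \<beta> * pi = 2 * c * pi"
      proof -
        have "2 * \<kappa> \<beta> * \<beta> * pi = 2 * (\<kappa> \<beta> * \<beta>) * pi" by (simp add: mult.assoc)
        then show ?thesis using c[OF b] by simp
      qed
      have e2: "exp (-1/\<beta>) < (2 - 2 * \<kappa> \<beta> * \<beta> * pi) / 2" unfolding ee using that by (simp add: P_def)
      note R = per_beta_concl[OF b kpos[OF b] ksmall[OF b] mini[OF b] _ e2]
      have k2: "2 * \<kappa> \<beta> * \<beta> = 2 * c" using c[OF b] by simp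
      have e1: "exp (-1/\<beta>) < 1/240" using that by (simp add: P_def)
      note R' = R[OF e1, unfolded k2]
      show ?thesis unfolding k2 using R' by blast
    qed
    show "\<forall>n. 1 \<le> n \<longrightarrow> (\<lambda>\<beta>. \<phi> \<beta> 1 - arcsin (2 * \<kappa> \<beta> * \<beta>)) \<in> o[at_right 0](\<lambda>\<beta>. \<beta> ^ n)"
    proof (intro allI impI)
      fix n :: nat assume "1 \<le> n"
      have small: "(\<lambda>\<beta>::real. exp (-1/\<beta>)) \<in> o[at_right 0](\<lambda>\<beta>. \<beta> ^ (2 * n))" by real_asymp
      show "(\<lambda>\<beta>. \<phi> \<beta> 1 - arcsin (2 * \<kappa> \<beta> * \<beta>)) \<in> o[at_right 0](\<lambda>\<beta>. \<beta> ^ n)"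
      proof (rule landau_o.smallI)
        fix e :: real assume e: "0 < e"
        define K where "K = e\<^sup>2 / (8 * (2 * c)\<^sup>2)"
        have K: "0 < K" using e c0 by (simp add: K_def)
        have ev: "\<forall>\<^sub>F \<beta> in at_right (0::real). norm (exp (-1/\<beta>)) \<le> K * norm (\<beta> ^ (2 * n))"
          using landau_o.smallD[OF small K] .
        show "\<forall>\<^sub>F \<beta> in at_right 0. norm (\<phi> \<beta> 1 - arcsin (2 * \<kappa> \<beta> * \<beta>)) \<le> e * norm (\<beta> ^ n)"
          using evP ev pos
        proof eventually_elim
          case (elim \<beta>)
          have sq: "(\<phi> \<beta> 1 - arcsin (2 * \<kappa> \<beta> * \<beta>))\<^sup>2 \<le> 8 * (2 * c)\<^sup>2 * exp (-1/\<beta>)"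
            using concl[OF elim(1)] by blast
          also have "\<dots> \<le> 8 * (2 * c)\<^sup>2 * (K * \<beta> ^ (2 * n))"
            using elim(2) elim(3) by (intro mult_left_mono) auto
          also have "\<dots> = (e * \<beta> ^ n)\<^sup>2"
            using c0 by (simp add: K_def power_mult power_mult_distrib field_simps)
          finally have "\<bar>\<phi> \<beta> 1 - arcsin (2 * \<kappa> \<beta> * \<beta>)\<bar> \<le> e * \<beta> ^ n"
            using e elim(3) by (intro sq_le_imp_abs_le) auto
          then show ?case using elim(3) by simp
        qed
      qed
    qed
    show "\<forall>\<^sub>F \<beta> in at_right 0. \<forall>x\<in>{0..1}. 0 \<le> \<phi> \<beta> x \<and> \<phi> \<beta> x \<le> \<phi> \<beta> 1 \<and> \<phi> \<beta> 1 < pi / 2"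
      using evP
    proof eventually_elim
      case (elim \<beta>)
      have C: "\<phi> \<beta> 1 \<le> pi/3" "\<forall>x\<in>{0..1}. 0 \<le> \<phi> \<beta> x \<and> \<phi> \<beta> x \<le> \<phi> \<beta> 1"
        using concl[OF elim] by blast+
      have "\<phi> \<beta> 1 < pi / 2" using C(1) pi_gt_zero by linarith
      then show ?case using C(2) by blast
    qed
  }
  {
    assume lim: "((\<lambda>\<beta>. \<kappa> \<beta> * \<beta>) \<longlongrightarrow> 0) (at_right 0)"
    show "(\<lambda>\<beta>. \<phi> \<beta> 1 - 2 * \<kappa> \<beta> * \<beta>) \<in> o[at_right 0](\<lambda>\<beta>. \<kappa> \<beta> * \<beta>)"
    proof (rule landau_o.smallI)
      fix e :: real assume e: "0 < e"
      have ev_k: "\<forall>\<^sub>F \<beta> in at_right 0. \<kappa> \<beta> * \<beta> < r" if "r > 0" for r :: real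
        using order_tendstoD(2)[OF lim that] .
      define r where "r = min (1 / (2 * pi)) (sqrt (3 * e / 64))"
      have r: "0 < r" using e by (simp add: r_def)
      have e128: "0 < e\<^sup>2 / 128" using e by simp
      show "\<forall>\<^sub>F \<beta> in at_right 0. norm (\<phi> \<beta> 1 - 2 * \<kappa> \<beta> * \<beta>) \<le> e * norm (\<kappa> \<beta> * \<beta>)"
        using pos ev240 ev_eta[OF e128] ev_k[OF r]
      proof eventually_elim
        case (elim \<beta>)
        have b: "0 < \<beta>" using elim by simp
        define s where "s = 2 * \<kappa> \<beta> * \<beta>"
        have s0: "0 < s" using kpos[OF b] b by (simp add: s_def)
        have kr: "\<kappa> \<beta> * \<beta> < r" using elim by simp
        have s_pi: "s * pi \<le> 1"
        proof -
          have "\<kappa> \<beta> * \<beta> \<le> 1 / (2 * pi)" using kr by (simp add: r_def)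
          then show ?thesis using pi_gt_zero by (simp add: s_def field_simps)
        qed
        have e2: "exp (-1/\<beta>) < (2 - 2 * \<kappa> \<beta> * \<beta> * pi) / 2"
          using elim s_pi by (simp add: s_def field_simps)
        note R = per_beta_concl[OF b kpos[OF b] ksmall[OF b] mini[OF b] _ e2]
        have sq: "(\<phi> \<beta> 1 - arcsin s)\<^sup>2 \<le> 8 * s\<^sup>2 * exp (-1/\<beta>)" using R elim by (simp add: s_def)
        also have "\<dots> \<le> 8 * s\<^sup>2 * (e\<^sup>2 / 128)" using elim by (intro mult_left_mono) auto
        also have "\<dots> = (e * s / 4)\<^sup>2" by (simp add: power2_eq_square field_simps)
        finally have d1: "\<bar>\<phi> \<beta> 1 - arcsin s\<bar> \<le> e * s / 4"
          using e s0 by (intro sq_le_imp_abs_le) auto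
        have s1: "s < 2 / pi" using ksmall[OF b] by (simp add: s_def field_simps)
        interpret S: sfix s using s0 s1 by unfold_locales
        have d2: "0 \<le> arcsin s - s" "arcsin s - s \<le> 4 * s ^ 3 / 3"
          using S.A_ge_s S.A_minus_s by (auto simp: S.A_def)
        have "4 * s ^ 3 / 3 \<le> e * s / 4"
        proof -
          have "\<kappa> \<beta> * \<beta> \<le> sqrt (3 * e / 64)" using kr by (simp add: r_def)
          then have "(\<kappa> \<beta> * \<beta>)\<^sup>2 \<le> (sqrt (3 * e / 64))\<^sup>2" using s0 by (intro power_mono) (auto simp: s_def mult.commute)
          then have "(\<kappa> \<beta> * \<beta>)\<^sup>2 \<le> 3 * e / 64" using e by simp
          then have "s\<^sup>2 \<le> 3 * e / 16" by (simp add: s_def power_mult_distrib)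
          then have "s * s\<^sup>2 \<le> s * (3 * e / 16)" using s0 by (intro mult_left_mono) auto
          then show ?thesis by (simp add: power3_eq_cube power2_eq_square field_simps)
        qed
        moreover have "\<bar>\<phi> \<beta> 1 - s\<bar> \<le> \<bar>\<phi> \<beta> 1 - arcsin s\<bar> + \<bar>arcsin s - s\<bar>"
          using abs_triangle_ineq[of "\<phi> \<beta> 1 - arcsin s" "arcsin s - s"] by simp
        moreover have "\<bar>arcsin s - s\<bar> = arcsin s - s" using d2(1) by simp
        ultimately have "\<bar>\<phi> \<beta> 1 - s\<bar> \<le> e * s / 2" using d1 d2 by linarith
        moreover have "norm (\<kappa> \<beta> * \<beta>) = \<kappa> \<beta> * \<beta>" using kpos[OF b] b by simp
        ultimately show ?case by (simp add: s_def)
      qed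
    qed
  }
qed


end
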